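(* Let $\mathbf{Q}=(q_{ij})_{i,j=1}^l$ be a complex matrix with $q_{ij}q_{ji}=1$ for all $i,j$. Then the vacuum $\mathcal{A}_{\mathbf{Q}}$-module $V_{\mathbf{Q}}$ is irreducible, and every nonzero vacuum $\mathcal{A}_{\mathbf{Q}}$-module is irreducible and isomorphic to $V_{\mathbf{Q}}$.
   Context: $\mathcal{A}_{\mathbf{Q}}$ is the unital complex associative algebra with generators $X_{i,n},Y_{i,n}$ ($1\le i\le l$, $n\in\mathbb{Z}$) and relations $X_{i,m}X_{j,n}=q_{ij}X_{j,n}X_{i,m}$, $Y_{i,m}Y_{j,n}=q_{ij}Y_{j,n}Y_{i,m}$, $X_{i,m}Y_{j,n}-q_{ji}Y_{j,n}X_{i,m}=\delta_{ij}\delta_{m+n+1,0}$ for $1\le i,j\le l$, $m,n\in\mathbb{Z}$. $\mathcal{A}^+_{\mathbf{Q}}$ is the subalgebra generated by $X_{i,m},Y_{i,m}$ with $m\ge0$. A vector $w$ in an $\mathcal{A}_{\mathbf{Q}}$-module is a vacuum vector if $X_{i,m}w=Y_{i,m}w=0$ for all $i$ and all $m\ge0$; a vacuum $\mathcal{A}_{\mathbf{Q}}$-module is a module equipped with a vacuum vector that generates it. $V_{\mathbf{Q}}=\mathcal{A}_{\mathbf{Q}}/(\mathcal{A}_{\mathbf{Q}}\mathcal{A}^+_{\mathbf{Q}})$ with vacuum vector $1+\mathcal{A}_{\mathbf{Q}}\mathcal{A}^+_{\mathbf{Q}}$. *)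

theory Defs
  imports Complex_Main "HOL-Algebra.Module"
begin

definition CC :: "complex ring" where
  "CC = \<lparr>carrier = UNIV, mult = (*), one = 1, zero = 0, add = (+)\<rparr>"

definition lin_op :: "(complex, 'm) module \<Rightarrow> ('m \<Rightarrow> 'm) \<Rightarrow> bool" where
  "lin_op M f \<longleftrightarrow> (\<forall>v\<in>carrier M. f v \<in> carrier M)
     \<and> (\<forall>u\<in>carrier M. \<forall>v\<in>carrier M. f (u \<oplus>\<^bsub>M\<^esub> v) = f u \<oplus>\<^bsub>M\<^esub> f v)
     \<and> (\<forall>c. \<forall>v\<in>carrier M. f (c \<odot>\<^bsub>M\<^esub> v) = c \<odot>\<^bsub>M\<^esub> f v)"

definition AQ_module ::
  "(nat \<Rightarrow> nat \<Rightarrow> complex) \<Rightarrow> nat \<Rightarrow> (complex, 'm) module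
   \<Rightarrow> (nat \<Rightarrow> int \<Rightarrow> 'm \<Rightarrow> 'm) \<Rightarrow> (nat \<Rightarrow> int \<Rightarrow> 'm \<Rightarrow> 'm) \<Rightarrow> bool" where
  "AQ_module Q l M X Y \<longleftrightarrow> module CC M
     \<and> (\<forall>i\<in>{1..l}. \<forall>n. lin_op M (X i n) \<and> lin_op M (Y i n))
     \<and> (\<forall>i\<in>{1..l}. \<forall>j\<in>{1..l}. \<forall>m n. \<forall>v\<in>carrier M.
          X i m (X j n v) = Q i j \<odot>\<^bsub>M\<^esub> X j n (X i m v)
        \<and> Y i m (Y j n v) = Q i j \<odot>\<^bsub>M\<^esub> Y j n (Y i m v)
        \<and> X i m (Y j n v) = Q j i \<odot>\<^bsub>M\<^esub> Y j n (X i m v)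
              \<oplus>\<^bsub>M\<^esub> (if i = j \<and> m + n + 1 = 0 then v else \<zero>\<^bsub>M\<^esub>))"

definition AQ_submodule ::
  "nat \<Rightarrow> 'm set \<Rightarrow> (complex, 'm) module
   \<Rightarrow> (nat \<Rightarrow> int \<Rightarrow> 'm \<Rightarrow> 'm) \<Rightarrow> (nat \<Rightarrow> int \<Rightarrow> 'm \<Rightarrow> 'm) \<Rightarrow> bool" where
  "AQ_submodule l N M X Y \<longleftrightarrow> submodule N CC M
     \<and> (\<forall>i\<in>{1..l}. \<forall>n. \<forall>v\<in>N. X i n v \<in> N \<and> Y i n v \<in> N)"

definition AQ_irreducible ::
  "(nat \<Rightarrow> nat \<Rightarrow> complex) \<Rightarrow> nat \<Rightarrow> (complex, 'm) module
   \<Rightarrow> (nat \<Rightarrow> int \<Rightarrow> 'm \<Rightarrow> 'm) \<Rightarrow> (nat \<Rightarrow> int \<Rightarrow> 'm \<Rightarrow> 'm) \<Rightarrow> bool" where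
  "AQ_irreducible Q l M X Y \<longleftrightarrow> AQ_module Q l M X Y \<and> carrier M \<noteq> {\<zero>\<^bsub>M\<^esub>}
     \<and> (\<forall>N. AQ_submodule l N M X Y \<longrightarrow> N = {\<zero>\<^bsub>M\<^esub>} \<or> N = carrier M)"

definition is_vacuum ::
  "nat \<Rightarrow> (complex, 'm) module
   \<Rightarrow> (nat \<Rightarrow> int \<Rightarrow> 'm \<Rightarrow> 'm) \<Rightarrow> (nat \<Rightarrow> int \<Rightarrow> 'm \<Rightarrow> 'm) \<Rightarrow> 'm \<Rightarrow> bool" where
  "is_vacuum l M X Y w \<longleftrightarrow> w \<in> carrier M
     \<and> (\<forall>i\<in>{1..l}. \<forall>m\<ge>0. X i m w = \<zero>\<^bsub>M\<^esub> \<and> Y i m w = \<zero>\<^bsub>M\<^esub>)"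

definition generates ::
  "nat \<Rightarrow> (complex, 'm) module
   \<Rightarrow> (nat \<Rightarrow> int \<Rightarrow> 'm \<Rightarrow> 'm) \<Rightarrow> (nat \<Rightarrow> int \<Rightarrow> 'm \<Rightarrow> 'm) \<Rightarrow> 'm \<Rightarrow> bool" where
  "generates l M X Y w \<longleftrightarrow> (\<forall>N. AQ_submodule l N M X Y \<and> w \<in> N \<longrightarrow> carrier M \<subseteq> N)"

definition vacuum_module ::
  "(nat \<Rightarrow> nat \<Rightarrow> complex) \<Rightarrow> nat \<Rightarrow> (complex, 'm) module
   \<Rightarrow> (nat \<Rightarrow> int \<Rightarrow> 'm \<Rightarrow> 'm) \<Rightarrow> (nat \<Rightarrow> int \<Rightarrow> 'm \<Rightarrow> 'm) \<Rightarrow> 'm \<Rightarrow> bool" where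
  "vacuum_module Q l M X Y w \<longleftrightarrow> AQ_module Q l M X Y \<and> is_vacuum l M X Y w
     \<and> generates l M X Y w"

definition AQ_iso ::
  "nat \<Rightarrow> ('a \<Rightarrow> 'b)
   \<Rightarrow> (complex, 'a) module \<Rightarrow> (nat \<Rightarrow> int \<Rightarrow> 'a \<Rightarrow> 'a) \<Rightarrow> (nat \<Rightarrow> int \<Rightarrow> 'a \<Rightarrow> 'a)
   \<Rightarrow> (complex, 'b) module \<Rightarrow> (nat \<Rightarrow> int \<Rightarrow> 'b \<Rightarrow> 'b) \<Rightarrow> (nat \<Rightarrow> int \<Rightarrow> 'b \<Rightarrow> 'b) \<Rightarrow> bool" where
  "AQ_iso l \<phi> M X Y M' X' Y' \<longleftrightarrow> bij_betw \<phi> (carrier M) (carrier M')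
     \<and> (\<forall>u\<in>carrier M. \<forall>v\<in>carrier M. \<phi> (u \<oplus>\<^bsub>M\<^esub> v) = \<phi> u \<oplus>\<^bsub>M'\<^esub> \<phi> v)
     \<and> (\<forall>c. \<forall>v\<in>carrier M. \<phi> (c \<odot>\<^bsub>M\<^esub> v) = c \<odot>\<^bsub>M'\<^esub> \<phi> v)
     \<and> (\<forall>i\<in>{1..l}. \<forall>n. \<forall>v\<in>carrier M. \<phi> (X i n v) = X' i n (\<phi> v) \<and> \<phi> (Y i n v) = Y' i n (\<phi> v))"

text \<open>Generators: (i, n, True) stands for X_{i,n}, (i, n, False) for Y_{i,n}.
  The free algebra on the generators with 1 <= i <= l is represented by finitely supported
  coefficient functions on words.\<close>

type_synonym gen = "nat \<times> int \<times> bool"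
type_synonym fa = "gen list \<Rightarrow> complex"

definition gens :: "nat \<Rightarrow> gen set" where
  "gens l = {(i, n, b). 1 \<le> i \<and> i \<le> l}"

definition FA :: "nat \<Rightarrow> fa set" where
  "FA l = {f. finite {w. f w \<noteq> 0} \<and> (\<forall>w. f w \<noteq> 0 \<longrightarrow> set w \<subseteq> gens l)}"

definition fa_zero :: fa where "fa_zero = (\<lambda>w. 0)"
definition fa_add :: "fa \<Rightarrow> fa \<Rightarrow> fa" where "fa_add f g = (\<lambda>w. f w + g w)"
definition fa_smult :: "complex \<Rightarrow> fa \<Rightarrow> fa" where "fa_smult c f = (\<lambda>w. c * f w)"
definition fa_word :: "gen list \<Rightarrow> fa" where "fa_word u = (\<lambda>w. if w = u then 1 else 0)"
definition fa_mult :: "fa \<Rightarrow> fa \<Rightarrow> fa" where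
  "fa_mult f g = (\<lambda>w. \<Sum>k\<le>length w. f (take k w) * g (drop k w))"

definition rels :: "(nat \<Rightarrow> nat \<Rightarrow> complex) \<Rightarrow> nat \<Rightarrow> fa set" where
  "rels Q l =
     {fa_add (fa_word [(i, m, b), (j, n, b)]) (fa_smult (- Q i j) (fa_word [(j, n, b), (i, m, b)]))
       | i j m n b. i \<in> {1..l} \<and> j \<in> {1..l}}
   \<union> {fa_add (fa_add (fa_word [(i, m, True), (j, n, False)])
                     (fa_smult (- Q j i) (fa_word [(j, n, False), (i, m, True)])))
             (if i = j \<and> m + n + 1 = 0 then fa_smult (-1) (fa_word []) else fa_zero)
       | i j m n. i \<in> {1..l} \<and> j \<in> {1..l}}"

text \<open>The subspace of the free algebra which is the preimage of A_Q A_Q^+: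
  the two-sided ideal of relations plus the left ideal generated by X_{i,m}, Y_{i,m}, m >= 0.\<close>
inductive_set NQ :: "(nat \<Rightarrow> nat \<Rightarrow> complex) \<Rightarrow> nat \<Rightarrow> fa set" for Q l where
  zero: "fa_zero \<in> NQ Q l"
| rel: "r \<in> rels Q l \<Longrightarrow> a \<in> FA l \<Longrightarrow> b \<in> FA l \<Longrightarrow> fa_mult a (fa_mult r b) \<in> NQ Q l"
| ann: "i \<in> {1..l} \<Longrightarrow> m \<ge> 0 \<Longrightarrow> a \<in> FA l \<Longrightarrow> fa_mult a (fa_word [(i, m, b)]) \<in> NQ Q l"
| add: "f \<in> NQ Q l \<Longrightarrow> g \<in> NQ Q l \<Longrightarrow> fa_add f g \<in> NQ Q l"
| smult: "f \<in> NQ Q l \<Longrightarrow> fa_smult c f \<in> NQ Q l"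

definition vq_class :: "(nat \<Rightarrow> nat \<Rightarrow> complex) \<Rightarrow> nat \<Rightarrow> fa \<Rightarrow> fa set" where
  "vq_class Q l f = {g \<in> FA l. fa_add g (fa_smult (-1) f) \<in> NQ Q l}"

definition vq_rep :: "fa set \<Rightarrow> fa" where "vq_rep A = (SOME f. f \<in> A)"

definition VQ :: "(nat \<Rightarrow> nat \<Rightarrow> complex) \<Rightarrow> nat \<Rightarrow> (complex, fa set) module" where
  "VQ Q l = \<lparr>carrier = vq_class Q l ` FA l,
             mult = (\<lambda>A B. vq_class Q l (fa_mult (vq_rep A) (vq_rep B))),
             one = vq_class Q l (fa_word []),
             zero = vq_class Q l fa_zero,
             add = (\<lambda>A B. vq_class Q l (fa_add (vq_rep A) (vq_rep B))),
             smult = (\<lambda>c A. vq_class Q l (fa_smult c (vq_rep A)))\<rparr>"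

definition VQ_X :: "(nat \<Rightarrow> nat \<Rightarrow> complex) \<Rightarrow> nat \<Rightarrow> nat \<Rightarrow> int \<Rightarrow> fa set \<Rightarrow> fa set" where
  "VQ_X Q l i n A = vq_class Q l (fa_mult (fa_word [(i, n, True)]) (vq_rep A))"

definition VQ_Y :: "(nat \<Rightarrow> nat \<Rightarrow> complex) \<Rightarrow> nat \<Rightarrow> nat \<Rightarrow> int \<Rightarrow> fa set \<Rightarrow> fa set" where
  "VQ_Y Q l i n A = vq_class Q l (fa_mult (fa_word [(i, n, False)]) (vq_rep A))"

definition VQ_vac :: "(nat \<Rightarrow> nat \<Rightarrow> complex) \<Rightarrow> nat \<Rightarrow> fa set" where
  "VQ_vac Q l = vq_class Q l (fa_word [])"

end

theory Submission
  imports Defs "HOL-Library.Product_Lexorder"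
begin


lemma CC_simps[simp]: "carrier CC = UNIV" "mult CC = (*)" "one CC = 1" "zero CC = 0" "add CC = (+)"
  by (simp_all add: CC_def)

lemma cring_CC: "cring CC"
  apply (rule cringI)
    apply (rule abelian_groupI)
         apply (auto simp: CC_def intro: exI[of _ "- _"])
   apply (rule comm_monoidI)
       apply (auto simp: CC_def algebra_simps)
  done

lemma CC_a_inv[simp]: "a_inv CC x = - x"
proof -
  interpret cring CC by (rule cring_CC)
  have "x \<oplus>\<^bsub>CC\<^esub> (- x) = \<zero>\<^bsub>CC\<^esub>" by simp
  then show ?thesis using minus_equality[of "-x" x] by (simp add: add.commute)
qed

lemmas fa_defs = fa_add_def fa_smult_def fa_zero_def

lemma fa_mult_add_left: "fa_mult (fa_add a b) x = fa_add (fa_mult a x) (fa_mult b x)"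
  by (auto simp: fa_mult_def fa_add_def sum.distrib distrib_right)
lemma fa_mult_add_right: "fa_mult x (fa_add a b) = fa_add (fa_mult x a) (fa_mult x b)"
  by (auto simp: fa_mult_def fa_add_def sum.distrib distrib_left)
lemma fa_mult_smult_left: "fa_mult (fa_smult c a) x = fa_smult c (fa_mult a x)"
  by (auto simp: fa_mult_def fa_smult_def sum_distrib_left mult.assoc)
lemma fa_mult_smult_right: "fa_mult x (fa_smult c a) = fa_smult c (fa_mult x a)"
  by (auto simp: fa_mult_def fa_smult_def sum_distrib_left algebra_simps)
lemma fa_mult_zero_left[simp]: "fa_mult fa_zero x = fa_zero"
  by (auto simp: fa_mult_def fa_zero_def)
lemma fa_mult_zero_right[simp]: "fa_mult x fa_zero = fa_zero"
  by (auto simp: fa_mult_def fa_zero_def)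

lemma fa_mult_word_word: "fa_mult (fa_word u) (fa_word v) = fa_word (u @ v)"
proof
  fix w
  have eq: "\<And>k. k \<in> {..length w} \<Longrightarrow> fa_word u (take k w) * fa_word v (drop k w)
           = (if k = length u \<and> w = u @ v then 1 else 0)"
  proof -
    fix k assume k: "k \<in> {..length w}"
    show "fa_word u (take k w) * fa_word v (drop k w) = (if k = length u \<and> w = u @ v then 1 else 0)"
    proof (cases "take k w = u \<and> drop k w = v")
      case True
      then have "k = length u" using k by auto
      moreover have "w = u @ v" using True by (metis append_take_drop_id)
      ultimately show ?thesis using True by (simp add: fa_word_def)
    next
      case False
      then show ?thesis by (auto simp: fa_word_def)
    qed
  qed
  have "fa_mult (fa_word u) (fa_word v) w = (\<Sum>k\<le>length w. (if k = length u \<and> w = u @ v then 1 else 0))"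
    unfolding fa_mult_def using eq by (rule sum.cong[OF refl])
  also have "\<dots> = fa_word (u @ v) w"
    by (cases "w = u @ v") (auto simp: fa_word_def)
  finally show "fa_mult (fa_word u) (fa_word v) w = fa_word (u @ v) w" .
qed

lemma fa_word_FA: "set u \<subseteq> gens l \<Longrightarrow> fa_word u \<in> FA l"
  by (auto simp: FA_def fa_word_def)
lemma fa_zero_FA[simp]: "fa_zero \<in> FA l"
  by (auto simp: FA_def fa_zero_def)
lemma fa_add_FA: "f \<in> FA l \<Longrightarrow> g \<in> FA l \<Longrightarrow> fa_add f g \<in> FA l"
proof -
  assume f: "f \<in> FA l" and g: "g \<in> FA l"
  have "{w. fa_add f g w \<noteq> 0} \<subseteq> {w. f w \<noteq> 0} \<union> {w. g w \<noteq> 0}" by (auto simp: fa_add_def)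
  then have "finite {w. fa_add f g w \<noteq> 0}" using f g by (auto simp: FA_def intro: finite_subset)
  moreover have "\<forall>w. fa_add f g w \<noteq> 0 \<longrightarrow> f w \<noteq> 0 \<or> g w \<noteq> 0" by (auto simp: fa_add_def)
  ultimately show ?thesis using f g unfolding FA_def by blast
qed
lemma fa_smult_FA: "f \<in> FA l \<Longrightarrow> fa_smult c f \<in> FA l"
proof -
  assume f: "f \<in> FA l"
  have "{w. fa_smult c f w \<noteq> 0} \<subseteq> {w. f w \<noteq> 0}" by (auto simp: fa_smult_def)
  then show ?thesis using f by (auto simp: FA_def fa_smult_def intro: finite_subset)
qed

lemma FA_induct[consumes 1, case_names zero step]:
  assumes f: "f \<in> FA l"
    and z: "P fa_zero"
    and s: "\<And>c u g. set u \<subseteq> gens l \<Longrightarrow> g \<in> FA l \<Longrightarrow> P g \<Longrightarrow> P (fa_add (fa_smult c (fa_word u)) g)"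
  shows "P f"
proof -
  have "\<forall>f. f \<in> FA l \<longrightarrow> card {w. f w \<noteq> 0} = n \<longrightarrow> P f" for n
  proof (induction n)
    case 0
    show ?case
    proof (intro allI impI)
      fix f assume "f \<in> FA l" "card {w. f w \<noteq> 0} = 0"
      then have "f = fa_zero" by (auto simp: FA_def fa_zero_def)
      then show "P f" using z by simp
    qed
  next
    case (Suc n)
    show ?case
    proof (intro allI impI)
      fix f assume f: "f \<in> FA l" and c: "card {w. f w \<noteq> 0} = Suc n"
      then obtain u where u: "f u \<noteq> 0" by (metis (mono_tags) card.empty empty_Collect_eq nat.distinct(1))
      define g where "g = f(u := 0)"
      have fin: "finite {w. f w \<noteq> 0}" using f by (simp add: FA_def)
      have "{w. g w \<noteq> 0} = {w. f w \<noteq> 0} - {u}" by (auto simp: g_def)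
      then have cg: "card {w. g w \<noteq> 0} = n" using c u fin by simp
      have gFA: "g \<in> FA l" using f by (auto simp: FA_def g_def intro: finite_subset)
      have us: "set u \<subseteq> gens l" using f u by (auto simp: FA_def)
      have "f = fa_add (fa_smult (f u) (fa_word u)) g"
        by (auto simp: fa_defs fa_word_def g_def)
      then show "P f" using s[OF us gFA] Suc.IH gFA cg by metis
    qed
  qed
  then show ?thesis using f by blast
qed

lemma fa_mult_word_FA: "x \<in> FA l \<Longrightarrow> set u \<subseteq> gens l \<Longrightarrow> fa_mult (fa_word u) x \<in> FA l"
proof (induction x rule: FA_induct)
  case zero then show ?case by simp
next
  case (step c v g)
  then show ?case
    by (simp add: fa_mult_add_right fa_mult_smult_right fa_mult_word_word fa_add_FA fa_smult_FA fa_word_FA)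
qed

lemma fa_mult_FA: "a \<in> FA l \<Longrightarrow> x \<in> FA l \<Longrightarrow> fa_mult a x \<in> FA l"
proof (induction a rule: FA_induct)
  case zero then show ?case by simp
next
  case (step c v g)
  then show ?case
    by (simp add: fa_mult_add_left fa_mult_smult_left fa_mult_word_FA fa_add_FA fa_smult_FA)
qed

lemma fa_mult_word_assoc3: "x \<in> FA l \<Longrightarrow> fa_mult (fa_word (u @ v)) x = fa_mult (fa_word u) (fa_mult (fa_word v) x)"
proof (induction x rule: FA_induct)
  case zero then show ?case by simp
next
  case (step c y g)
  then show ?case
    by (simp add: fa_mult_add_right fa_mult_smult_right fa_mult_word_word)
qed

lemma fa_mult_word_assoc2: "b \<in> FA l \<Longrightarrow> x \<in> FA l \<Longrightarrow> fa_mult (fa_mult (fa_word u) b) x = fa_mult (fa_word u) (fa_mult b x)"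
proof (induction b rule: FA_induct)
  case zero then show ?case by simp
next
  case (step c y g)
  then show ?case
    by (simp add: fa_mult_add_right fa_mult_smult_right fa_mult_add_left fa_mult_smult_left
        fa_mult_word_word fa_mult_word_assoc3)
qed

lemma fa_mult_assoc: "a \<in> FA l \<Longrightarrow> b \<in> FA l \<Longrightarrow> x \<in> FA l \<Longrightarrow> fa_mult (fa_mult a b) x = fa_mult a (fa_mult b x)"
proof (induction a rule: FA_induct)
  case zero then show ?case by simp
next
  case (step c y g)
  then show ?case
    by (simp add: fa_mult_add_left fa_mult_smult_left fa_mult_word_assoc2)
qed

lemma fa_mult_one_left[simp]: "fa_mult (fa_word []) x = x"
proof
  fix w
  have "fa_mult (fa_word []) x w = (\<Sum>k\<le>length w. if k = 0 then x (drop k w) else 0)"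
    unfolding fa_mult_def fa_word_def by (rule sum.cong) auto
  also have "\<dots> = x w" by (subst sum.delta) auto
  finally show "fa_mult (fa_word []) x w = x w" .
qed


definition op :: "(nat \<Rightarrow> int \<Rightarrow> 'm \<Rightarrow> 'm) \<Rightarrow> (nat \<Rightarrow> int \<Rightarrow> 'm \<Rightarrow> 'm) \<Rightarrow> gen \<Rightarrow> 'm \<Rightarrow> 'm" where
  "op X Y a = (case a of (i, m, b) \<Rightarrow> if b then X i m else Y i m)"

definition ev :: "(nat \<Rightarrow> int \<Rightarrow> 'm \<Rightarrow> 'm) \<Rightarrow> (nat \<Rightarrow> int \<Rightarrow> 'm \<Rightarrow> 'm) \<Rightarrow> gen list \<Rightarrow> 'm \<Rightarrow> 'm" where
  "ev X Y u v = foldr (op X Y) u v"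

definition kap :: "(nat \<Rightarrow> nat \<Rightarrow> complex) \<Rightarrow> gen \<Rightarrow> gen \<Rightarrow> complex" where
  "kap Q a d = (case a of (i, m, b) \<Rightarrow> case d of (j, n, b') \<Rightarrow> if b = b' then Q i j else Q j i)"

definition partner :: "gen \<Rightarrow> gen" where
  "partner a = (case a of (i, m, b) \<Rightarrow> (i, - m - 1, \<not> b))"

definition dlt :: "(nat \<Rightarrow> nat \<Rightarrow> complex) \<Rightarrow> gen \<Rightarrow> gen \<Rightarrow> complex" where
  "dlt Q a d = (case a of (i, m, b) \<Rightarrow> if d = partner a then (if b then 1 else - Q i i) else 0)"

definition crt :: "gen \<Rightarrow> bool" where "crt a = (fst (snd a) < 0)"

definition act :: "(complex, 'm) module \<Rightarrow> (nat \<Rightarrow> int \<Rightarrow> 'm \<Rightarrow> 'm) \<Rightarrow> (nat \<Rightarrow> int \<Rightarrow> 'm \<Rightarrow> 'm) \<Rightarrow> fa \<Rightarrow> 'm \<Rightarrow> 'm" where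
  "act M X Y f v = finsum M (\<lambda>u. f u \<odot>\<^bsub>M\<^esub> ev X Y u v) {u. f u \<noteq> 0}"

lemma gens_iff[simp]: "(i, m, b) \<in> gens l \<longleftrightarrow> 1 \<le> i \<and> i \<le> l"
  by (simp add: gens_def)
lemma partner_gens[simp]: "partner a \<in> gens l \<longleftrightarrow> a \<in> gens l"
  by (cases a) (auto simp: partner_def)
lemma partner_partner[simp]: "partner (partner a) = a"
  by (cases a) (auto simp: partner_def)
lemma crt_partner: "crt (partner a) \<longleftrightarrow> \<not> crt a"
  by (cases a) (auto simp: partner_def crt_def)

locale aqm =
  fixes Q :: "nat \<Rightarrow> nat \<Rightarrow> complex" and l :: nat and M :: "(complex, 'm) module"
    and X Y :: "nat \<Rightarrow> int \<Rightarrow> 'm \<Rightarrow> 'm"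
  assumes aq: "AQ_module Q l M X Y"
    and Qinv: "\<And>i j. i \<in> {1..l} \<Longrightarrow> j \<in> {1..l} \<Longrightarrow> Q i j * Q j i = 1"
begin

sublocale module CC M using aq by (simp add: AQ_module_def)

lemma sm_add: "x \<in> carrier M \<Longrightarrow> (a + b) \<odot>\<^bsub>M\<^esub> x = a \<odot>\<^bsub>M\<^esub> x \<oplus>\<^bsub>M\<^esub> b \<odot>\<^bsub>M\<^esub> x"
  using smult_l_distr[of a b x] by simp
lemma sm_mult: "x \<in> carrier M \<Longrightarrow> (a * b) \<odot>\<^bsub>M\<^esub> x = a \<odot>\<^bsub>M\<^esub> (b \<odot>\<^bsub>M\<^esub> x)"
  using smult_assoc1[of a b x] by simp
lemma sm_zero[simp]: "x \<in> carrier M \<Longrightarrow> 0 \<odot>\<^bsub>M\<^esub> x = \<zero>\<^bsub>M\<^esub>"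
  using smult_l_null[of x] by simp
lemma sm_one[simp]: "x \<in> carrier M \<Longrightarrow> 1 \<odot>\<^bsub>M\<^esub> x = x"
  using smult_one[of x] by simp
lemma sm_closed[simp]: "x \<in> carrier M \<Longrightarrow> c \<odot>\<^bsub>M\<^esub> x \<in> carrier M"
  by simp
lemma sm_rzero[simp]: "c \<odot>\<^bsub>M\<^esub> \<zero>\<^bsub>M\<^esub> = \<zero>\<^bsub>M\<^esub>"
  using smult_r_null[of c] by simp
lemma sm_neg: "x \<in> carrier M \<Longrightarrow> \<ominus>\<^bsub>M\<^esub> x = (-1) \<odot>\<^bsub>M\<^esub> x"
  using smult_l_minus[of 1 x] by simp

lemma XY_closed[simp]: "i \<in> {1..l} \<Longrightarrow> v \<in> carrier M \<Longrightarrow> X i n v \<in> carrier M"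
   "i \<in> {1..l} \<Longrightarrow> v \<in> carrier M \<Longrightarrow> Y i n v \<in> carrier M"
  using aq by (auto simp: AQ_module_def lin_op_def)

lemma op_lin: "a \<in> gens l \<Longrightarrow> lin_op M (op X Y a)"
  using aq by (cases a) (auto simp: AQ_module_def op_def)

lemma op_closed[simp]: "a \<in> gens l \<Longrightarrow> v \<in> carrier M \<Longrightarrow> op X Y a v \<in> carrier M"
  using op_lin by (auto simp: lin_op_def)
lemma op_add: "a \<in> gens l \<Longrightarrow> u \<in> carrier M \<Longrightarrow> v \<in> carrier M \<Longrightarrow>
    op X Y a (u \<oplus>\<^bsub>M\<^esub> v) = op X Y a u \<oplus>\<^bsub>M\<^esub> op X Y a v"
  using op_lin by (auto simp: lin_op_def)
lemma op_smult: "a \<in> gens l \<Longrightarrow> v \<in> carrier M \<Longrightarrow> op X Y a (c \<odot>\<^bsub>M\<^esub> v) = c \<odot>\<^bsub>M\<^esub> op X Y a v"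
  using op_lin by (auto simp: lin_op_def)
lemma op_zero[simp]: "a \<in> gens l \<Longrightarrow> op X Y a \<zero>\<^bsub>M\<^esub> = \<zero>\<^bsub>M\<^esub>"
  using op_smult[of a "\<zero>\<^bsub>M\<^esub>" 0] by simp

lemma comm:
  assumes a: "a \<in> gens l" and d: "d \<in> gens l" and v: "v \<in> carrier M"
  shows "op X Y a (op X Y d v) = kap Q a d \<odot>\<^bsub>M\<^esub> op X Y d (op X Y a v) \<oplus>\<^bsub>M\<^esub> dlt Q a d \<odot>\<^bsub>M\<^esub> v"
proof -
  obtain i m b where a': "a = (i, m, b)" by (cases a)
  obtain j n b' where d': "d = (j, n, b')" by (cases d)
  have ij: "i \<in> {1..l}" "j \<in> {1..l}" using a d a' d' by auto
  note R = aq[unfolded AQ_module_def, THEN conjunct2, THEN conjunct2, rule_format, OF ij v]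
  note R' = aq[unfolded AQ_module_def, THEN conjunct2, THEN conjunct2, rule_format, OF ij(2) ij(1) v]
  have cl: "X i m v \<in> carrier M" "Y i m v \<in> carrier M" "X j n v \<in> carrier M" "Y j n v \<in> carrier M"
    using ij v by auto
  have cl2: "X i m (Y j n v) \<in> carrier M" "Y i m (X j n v) \<in> carrier M"
     "Y j n (X i m v) \<in> carrier M" "X j n (Y i m v) \<in> carrier M"
    using ij cl by auto
  show ?thesis
  proof (cases b)
    case True
    show ?thesis
    proof (cases b')
      case True
      then show ?thesis using R \<open>b\<close> a' d' ij v
        by (auto simp: op_def kap_def dlt_def partner_def)
    next
      case False
      have "(if i = j \<and> m + n + 1 = 0 then v else \<zero>\<^bsub>M\<^esub>) = dlt Q a d \<odot>\<^bsub>M\<^esub> v"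
        using \<open>b\<close> False a' d' v by (auto simp: dlt_def partner_def)
      then show ?thesis using R \<open>b\<close> False a' d' by (simp add: op_def kap_def)
    qed
  next
    case False
    show ?thesis
    proof (cases b')
      case True
      have Ry: "X j n (Y i m v) = Q i j \<odot>\<^bsub>M\<^esub> Y i m (X j n v) \<oplus>\<^bsub>M\<^esub> (if j = i \<and> n + m + 1 = 0 then v else \<zero>\<^bsub>M\<^esub>)"
        using R' by simp
      have goal: "Y i m (X j n v) = Q j i \<odot>\<^bsub>M\<^esub> X j n (Y i m v) \<oplus>\<^bsub>M\<^esub> dlt Q a d \<odot>\<^bsub>M\<^esub> v"
      proof (cases "j = i \<and> n + m + 1 = 0")
        case c: True
        have dl: "dlt Q a d = - Q i i" using c False True a' d' by (auto simp: dlt_def partner_def)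
        have "Q j i \<odot>\<^bsub>M\<^esub> X j n (Y i m v) = (Q j i * Q i j) \<odot>\<^bsub>M\<^esub> Y i m (X j n v) \<oplus>\<^bsub>M\<^esub> Q j i \<odot>\<^bsub>M\<^esub> v"
          using Ry c cl2 v by (simp add: smult_r_distr sm_mult)
        also have "\<dots> = Y i m (X j n v) \<oplus>\<^bsub>M\<^esub> Q i i \<odot>\<^bsub>M\<^esub> v" using Qinv[OF ij(2) ij(1)] c cl2 by simp
        finally have "Q j i \<odot>\<^bsub>M\<^esub> X j n (Y i m v) \<oplus>\<^bsub>M\<^esub> dlt Q a d \<odot>\<^bsub>M\<^esub> v
           = Y i m (X j n v) \<oplus>\<^bsub>M\<^esub> (Q i i \<odot>\<^bsub>M\<^esub> v \<oplus>\<^bsub>M\<^esub> (- Q i i) \<odot>\<^bsub>M\<^esub> v)"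
          using dl cl2 v by (simp add: M.a_assoc)
        also have "\<dots> = Y i m (X j n v)" using cl2 v sm_add[of v "Q i i" "- Q i i", symmetric] by simp
        finally show ?thesis by simp
      next
        case c: False
        have dl: "dlt Q a d = 0" using c False True a' d' by (auto simp: dlt_def partner_def)
        have "Q j i \<odot>\<^bsub>M\<^esub> X j n (Y i m v) = (Q j i * Q i j) \<odot>\<^bsub>M\<^esub> Y i m (X j n v)"
          using Ry c cl2 v by (simp add: sm_mult)
        also have "\<dots> = Y i m (X j n v)" using Qinv[OF ij(2) ij(1)] cl2 by simp
        finally show ?thesis using dl v cl2 by simp
      qed
      then show ?thesis using False True a' d' by (simp add: op_def kap_def)
    next
      case b'F: False
      then show ?thesis using R False a' d' ij v
        by (auto simp: op_def kap_def dlt_def partner_def)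
    qed
  qed
qed


lemma ev_Nil[simp]: "ev X Y [] v = v" by (simp add: ev_def)
lemma ev_Cons[simp]: "ev X Y (a # u) v = op X Y a (ev X Y u v)" by (simp add: ev_def)
lemma ev_append: "ev X Y (u @ x) v = ev X Y u (ev X Y x v)" by (simp add: ev_def)

lemma ev_closed[simp]: "set u \<subseteq> gens l \<Longrightarrow> v \<in> carrier M \<Longrightarrow> ev X Y u v \<in> carrier M"
  by (induction u) auto
lemma ev_add: "set u \<subseteq> gens l \<Longrightarrow> x \<in> carrier M \<Longrightarrow> y \<in> carrier M \<Longrightarrow>
   ev X Y u (x \<oplus>\<^bsub>M\<^esub> y) = ev X Y u x \<oplus>\<^bsub>M\<^esub> ev X Y u y"
  by (induction u) (auto simp: op_add)
lemma ev_smult: "set u \<subseteq> gens l \<Longrightarrow> x \<in> carrier M \<Longrightarrow> ev X Y u (c \<odot>\<^bsub>M\<^esub> x) = c \<odot>\<^bsub>M\<^esub> ev X Y u x"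
  by (induction u) (auto simp: op_smult)
lemma ev_zero[simp]: "set u \<subseteq> gens l \<Longrightarrow> ev X Y u \<zero>\<^bsub>M\<^esub> = \<zero>\<^bsub>M\<^esub>"
  by (induction u) auto

lemma FA_supp: "f \<in> FA l \<Longrightarrow> f u \<noteq> 0 \<Longrightarrow> set u \<subseteq> gens l"
  by (auto simp: FA_def)
lemma FA_fin: "f \<in> FA l \<Longrightarrow> finite {u. f u \<noteq> 0}"
  by (auto simp: FA_def)

lemma act_closed[simp]: "f \<in> FA l \<Longrightarrow> v \<in> carrier M \<Longrightarrow> act M X Y f v \<in> carrier M"
  unfolding act_def by (rule M.finsum_closed) (auto dest: FA_supp)

lemma act_superset:
  assumes f: "f \<in> FA l" and S: "finite S" "{u. f u \<noteq> 0} \<subseteq> S" "S \<subseteq> {u. set u \<subseteq> gens l}"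
    and v: "v \<in> carrier M"
  shows "act M X Y f v = finsum M (\<lambda>u. f u \<odot>\<^bsub>M\<^esub> ev X Y u v) S"
  unfolding act_def
  by (rule M.add.finprod_mono_neutral_cong_left) (use S v in auto)

lemma act_zero[simp]: "act M X Y fa_zero v = \<zero>\<^bsub>M\<^esub>"
  by (simp add: act_def fa_zero_def)

lemma act_step:
  assumes u: "set u \<subseteq> gens l" and g: "g \<in> FA l" and v: "v \<in> carrier M"
  shows "act M X Y (fa_add (fa_smult c (fa_word u)) g) v = c \<odot>\<^bsub>M\<^esub> ev X Y u v \<oplus>\<^bsub>M\<^esub> act M X Y g v"
proof -
  define S where "S = insert u {x. g x \<noteq> 0}"
  have S: "finite S" "S \<subseteq> {x. set x \<subseteq> gens l}" using g u by (auto simp: S_def FA_def)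
  have F: "fa_add (fa_smult c (fa_word u)) g \<in> FA l" using u g by (simp add: fa_add_FA fa_smult_FA fa_word_FA)
  have "act M X Y (fa_add (fa_smult c (fa_word u)) g) v
      = finsum M (\<lambda>x. fa_add (fa_smult c (fa_word u)) g x \<odot>\<^bsub>M\<^esub> ev X Y x v) S"
    by (rule act_superset[OF F S(1) _ S(2) v]) (auto simp: S_def fa_defs fa_word_def)
  also have "\<dots> = finsum M (\<lambda>x. (if x = u then c else 0) \<odot>\<^bsub>M\<^esub> ev X Y x v \<oplus>\<^bsub>M\<^esub> g x \<odot>\<^bsub>M\<^esub> ev X Y x v) S"
    by (rule M.finsum_cong') (use S v in \<open>auto simp: fa_defs fa_word_def sm_add\<close>)
  also have "\<dots> = finsum M (\<lambda>x. (if x = u then c else 0) \<odot>\<^bsub>M\<^esub> ev X Y x v) S \<oplus>\<^bsub>M\<^esub>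
        finsum M (\<lambda>x. g x \<odot>\<^bsub>M\<^esub> ev X Y x v) S"
    by (rule M.finsum_addf) (use S v in auto)
  also have "finsum M (\<lambda>x. (if x = u then c else 0) \<odot>\<^bsub>M\<^esub> ev X Y x v) S
      = finsum M (\<lambda>x. (if x = u then c else 0) \<odot>\<^bsub>M\<^esub> ev X Y x v) {u}"
    by (rule M.add.finprod_mono_neutral_cong_right) (use S v in \<open>auto simp: S_def\<close>)
  also have "\<dots> = c \<odot>\<^bsub>M\<^esub> ev X Y u v" using u v by simp
  also have "finsum M (\<lambda>x. g x \<odot>\<^bsub>M\<^esub> ev X Y x v) S = act M X Y g v"
    by (rule act_superset[symmetric, OF g S(1) _ S(2) v]) (auto simp: S_def)
  finally show ?thesis .
qed

lemma act_add: "f \<in> FA l \<Longrightarrow> g \<in> FA l \<Longrightarrow> v \<in> carrier M \<Longrightarrow>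
    act M X Y (fa_add f g) v = act M X Y f v \<oplus>\<^bsub>M\<^esub> act M X Y g v"
proof (induction f rule: FA_induct)
  case zero
  have "fa_add fa_zero g = g" by (auto simp: fa_defs)
  then show ?case using zero by simp
next
  case (step c u h)
  have e: "fa_add (fa_add (fa_smult c (fa_word u)) h) g = fa_add (fa_smult c (fa_word u)) (fa_add h g)"
    by (auto simp: fa_defs)
  show ?case using step
    by (simp add: e act_step fa_add_FA M.a_assoc)
qed

lemma act_smult: "f \<in> FA l \<Longrightarrow> v \<in> carrier M \<Longrightarrow>
    act M X Y (fa_smult c f) v = c \<odot>\<^bsub>M\<^esub> act M X Y f v"
proof (induction f rule: FA_induct)
  case zero
  have "fa_smult c fa_zero = fa_zero" by (auto simp: fa_defs)
  then show ?case by simp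
next
  case (step d u h)
  have e: "fa_smult c (fa_add (fa_smult d (fa_word u)) h) = fa_add (fa_smult (c * d) (fa_word u)) (fa_smult c h)"
    by (auto simp: fa_defs algebra_simps)
  show ?case using step
    by (simp add: e act_step fa_smult_FA smult_r_distr sm_mult)
qed

lemma act_word: "set u \<subseteq> gens l \<Longrightarrow> v \<in> carrier M \<Longrightarrow> act M X Y (fa_word u) v = ev X Y u v"
proof -
  assume u: "set u \<subseteq> gens l" and v: "v \<in> carrier M"
  have "fa_word u = fa_add (fa_smult 1 (fa_word u)) fa_zero" by (auto simp: fa_defs)
  then show ?thesis using act_step[OF u fa_zero_FA v, of 1] u v by simp
qed

lemma act_word_mult: "x \<in> FA l \<Longrightarrow> set u \<subseteq> gens l \<Longrightarrow> v \<in> carrier M \<Longrightarrow>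
   act M X Y (fa_mult (fa_word u) x) v = ev X Y u (act M X Y x v)"
proof (induction x rule: FA_induct)
  case zero then show ?case by simp
next
  case (step c y g)
  then show ?case
    by (simp add: fa_mult_add_right fa_mult_smult_right fa_mult_word_word act_add act_smult
        fa_smult_FA fa_word_FA fa_mult_word_FA act_word ev_add ev_smult ev_append)
qed

lemma act_mult: "a \<in> FA l \<Longrightarrow> x \<in> FA l \<Longrightarrow> v \<in> carrier M \<Longrightarrow>
   act M X Y (fa_mult a x) v = act M X Y a (act M X Y x v)"
proof (induction a rule: FA_induct)
  case zero then show ?case by simp
next
  case (step c u g)
  then show ?case
    by (simp add: fa_mult_add_left fa_mult_smult_left act_add act_smult act_step
        fa_smult_FA fa_mult_word_FA fa_mult_FA act_word_mult)
qed

lemma act_at_zero[simp]: "f \<in> FA l \<Longrightarrow> act M X Y f \<zero>\<^bsub>M\<^esub> = \<zero>\<^bsub>M\<^esub>"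
proof (induction f rule: FA_induct)
  case zero then show ?case by simp
next
  case (step c u g)
  then show ?case by (simp add: act_step)
qed

lemma rels_FA: "r \<in> rels Q l \<Longrightarrow> r \<in> FA l"
  unfolding rels_def
  by (auto intro!: fa_add_FA fa_smult_FA fa_word_FA)

lemma act_rel:
  assumes r: "r \<in> rels Q l" and y: "y \<in> carrier M"
  shows "act M X Y r y = \<zero>\<^bsub>M\<^esub>"
proof -
  note R = aq[unfolded AQ_module_def, THEN conjunct2, THEN conjunct2, rule_format]
  from r consider (a) i j m n b where "i \<in> {1..l}" "j \<in> {1..l}"
     "r = fa_add (fa_word [(i, m, b), (j, n, b)]) (fa_smult (- Q i j) (fa_word [(j, n, b), (i, m, b)]))"
   | (b) i j m n where "i \<in> {1..l}" "j \<in> {1..l}"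
     "r = fa_add (fa_add (fa_word [(i, m, True), (j, n, False)])
                     (fa_smult (- Q j i) (fa_word [(j, n, False), (i, m, True)])))
             (if i = j \<and> m + n + 1 = 0 then fa_smult (-1) (fa_word []) else fa_zero)"
    unfolding rels_def by blast
  then show ?thesis
  proof cases
    case a
    have e: "fa_add (fa_word [(i, m, b), (j, n, b)]) (fa_smult (- Q i j) (fa_word [(j, n, b), (i, m, b)]))
      = fa_add (fa_smult 1 (fa_word [(i, m, b), (j, n, b)])) (fa_add (fa_smult (- Q i j) (fa_word [(j, n, b), (i, m, b)])) fa_zero)"
      by (auto simp: fa_defs)
    have cl: "X i m (X j n y) \<in> carrier M" "Y i m (Y j n y) \<in> carrier M" using a y by auto
    have "act M X Y r y = op X Y (i, m, b) (op X Y (j, n, b) y) \<oplus>\<^bsub>M\<^esub>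
        (- Q i j) \<odot>\<^bsub>M\<^esub> op X Y (j, n, b) (op X Y (i, m, b) y)"
      using a y by (simp add: e act_step fa_add_FA fa_smult_FA fa_word_FA)
    also have "\<dots> = (Q i j) \<odot>\<^bsub>M\<^esub> op X Y (j, n, b) (op X Y (i, m, b) y) \<oplus>\<^bsub>M\<^esub>
        (- Q i j) \<odot>\<^bsub>M\<^esub> op X Y (j, n, b) (op X Y (i, m, b) y)"
      using R[OF a(1) a(2) y] by (simp add: op_def)
    also have "\<dots> = \<zero>\<^bsub>M\<^esub>" using sm_add[of _ "Q i j" "- Q i j", symmetric] a y by simp
    finally show ?thesis .
  next
    case b
    let ?z = "op X Y (j, n, False) (op X Y (i, m, True) y)"
    have zc: "?z \<in> carrier M" using b y by simp
    have c1: "act M X Y (fa_add (fa_word [(i, m, True), (j, n, False)])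
                     (fa_smult (- Q j i) (fa_word [(j, n, False), (i, m, True)]))) y
         = (if i = j \<and> m + n + 1 = 0 then y else \<zero>\<^bsub>M\<^esub>)"
    proof -
      have e: "fa_add (fa_word [(i, m, True), (j, n, False)]) (fa_smult (- Q j i) (fa_word [(j, n, False), (i, m, True)]))
        = fa_add (fa_smult 1 (fa_word [(i, m, True), (j, n, False)])) (fa_add (fa_smult (- Q j i) (fa_word [(j, n, False), (i, m, True)])) fa_zero)"
        by (auto simp: fa_defs)
      have "act M X Y (fa_add (fa_word [(i, m, True), (j, n, False)])
                     (fa_smult (- Q j i) (fa_word [(j, n, False), (i, m, True)]))) y
           = op X Y (i, m, True) (op X Y (j, n, False) y) \<oplus>\<^bsub>M\<^esub> (- Q j i) \<odot>\<^bsub>M\<^esub> ?z"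
        using b y by (simp add: e act_step fa_add_FA fa_smult_FA fa_word_FA)
      also have "\<dots> = ((Q j i) \<odot>\<^bsub>M\<^esub> ?z \<oplus>\<^bsub>M\<^esub> (if i = j \<and> m + n + 1 = 0 then y else \<zero>\<^bsub>M\<^esub>))
            \<oplus>\<^bsub>M\<^esub> (- Q j i) \<odot>\<^bsub>M\<^esub> ?z"
        using R[OF b(1) b(2) y] by (simp add: op_def)
      also have "\<dots> = (if i = j \<and> m + n + 1 = 0 then y else \<zero>\<^bsub>M\<^esub>) \<oplus>\<^bsub>M\<^esub>
           ((Q j i) \<odot>\<^bsub>M\<^esub> ?z \<oplus>\<^bsub>M\<^esub> (- Q j i) \<odot>\<^bsub>M\<^esub> ?z)"
        using zc y by (simp add: M.a_ac)
      also have "\<dots> = (if i = j \<and> m + n + 1 = 0 then y else \<zero>\<^bsub>M\<^esub>)"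
        using sm_add[of ?z "Q j i" "- Q j i", symmetric] zc y by simp
      finally show ?thesis .
    qed
    show ?thesis
    proof (cases "i = j \<and> m + n + 1 = 0")
      case True
      have "act M X Y r y = y \<oplus>\<^bsub>M\<^esub> (-1) \<odot>\<^bsub>M\<^esub> y"
        using b True y c1 by (simp add: act_add act_smult act_word fa_add_FA fa_smult_FA fa_word_FA)
      also have "\<dots> = \<zero>\<^bsub>M\<^esub>" using y sm_neg[of y] M.r_neg[of y] by simp
      finally show ?thesis .
    next
      case False
      have r': "r = fa_add (fa_add (fa_word [(i, m, True), (j, n, False)])
                     (fa_smult (- Q j i) (fa_word [(j, n, False), (i, m, True)]))) fa_zero"
        using b(3) False by simp
      have "act M X Y r y = (if i = j \<and> m + n + 1 = 0 then y else \<zero>\<^bsub>M\<^esub>)"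
        unfolding r' using b y c1 by (subst act_add) (auto simp: fa_add_FA fa_smult_FA fa_word_FA)
      then show ?thesis using False by simp
    qed
  qed
qed

lemma NQ_act:
  assumes n: "n \<in> NQ Q l" and w: "is_vacuum l M X Y w"
  shows "n \<in> FA l \<and> act M X Y n w = \<zero>\<^bsub>M\<^esub>"
  using n
proof (induction rule: NQ.induct)
  case zero then show ?case by simp
next
  case (rel r a b)
  have wc: "w \<in> carrier M" using w by (simp add: is_vacuum_def)
  have rF: "r \<in> FA l" using rel rels_FA by blast
  have "act M X Y (fa_mult a (fa_mult r b)) w = act M X Y a (act M X Y r (act M X Y b w))"
    using rel rF wc by (simp add: act_mult fa_mult_FA)
  also have "\<dots> = \<zero>\<^bsub>M\<^esub>" using act_rel[OF rel(1)] rel wc by simp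
  finally show ?case using rel rF by (simp add: fa_mult_FA)
next
  case (ann i m a b)
  have wc: "w \<in> carrier M" using w by (simp add: is_vacuum_def)
  have s: "set [(i, m, b)] \<subseteq> gens l" using ann by simp
  have "op X Y (i, m, b) w = \<zero>\<^bsub>M\<^esub>" using w ann by (auto simp: is_vacuum_def op_def)
  then have "act M X Y (fa_mult a (fa_word [(i, m, b)])) w = \<zero>\<^bsub>M\<^esub>"
    using ann wc s by (simp add: act_mult fa_word_FA act_word)
  then show ?case using ann s by (simp add: fa_mult_FA fa_word_FA)
next
  case (add f g)
  then show ?case using w by (simp add: act_add fa_add_FA is_vacuum_def)
next
  case (smult f c)
  then show ?case using w by (simp add: act_smult fa_smult_FA is_vacuum_def)
qed

end


lemma kap_partner_mult:
  assumes "Q (fst c) (fst d) * Q (fst d) (fst c) = 1"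
  shows "kap Q (partner c) d * kap Q c d = 1"
  using assms by (cases c; cases d) (auto simp: kap_def partner_def mult.commute)

locale vqm = aqm +
  fixes w :: 'm
  assumes vm: "vacuum_module Q l M X Y w"
begin

lemma wc[simp]: "w \<in> carrier M"
  using vm by (simp add: vacuum_module_def is_vacuum_def)

lemma vac: "a \<in> gens l \<Longrightarrow> \<not> crt a \<Longrightarrow> op X Y a w = \<zero>\<^bsub>M\<^esub>"
  using vm by (cases a) (auto simp: vacuum_module_def is_vacuum_def op_def crt_def)

definition evc :: "(complex \<times> gen list) list \<Rightarrow> 'm" where
  "evc L = foldr (\<lambda>(c, u) acc. c \<odot>\<^bsub>M\<^esub> ev X Y u w \<oplus>\<^bsub>M\<^esub> acc) L \<zero>\<^bsub>M\<^esub>"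

definition cre :: "gen set" where "cre = {a \<in> gens l. crt a}"

definition wf :: "(complex \<times> gen list) list \<Rightarrow> bool" where
  "wf L = (\<forall>(c, u) \<in> set L. set u \<subseteq> gens l)"

definition okL :: "nat \<Rightarrow> (complex \<times> gen list) list \<Rightarrow> bool" where
  "okL k L = (\<forall>(c, u) \<in> set L. set u \<subseteq> cre \<and> length u \<le> k)"

definition SK :: "nat \<Rightarrow> 'm set" where "SK k = {evc L | L. okL k L}"

lemma cre_gens: "a \<in> cre \<Longrightarrow> a \<in> gens l" by (simp add: cre_def)

lemma okL_wf: "okL k L \<Longrightarrow> wf L"
  by (auto simp: okL_def wf_def cre_def)

lemma evc_Nil[simp]: "evc [] = \<zero>\<^bsub>M\<^esub>" by (simp add: evc_def)
lemma evc_Cons[simp]: "evc ((c, u) # L) = c \<odot>\<^bsub>M\<^esub> ev X Y u w \<oplus>\<^bsub>M\<^esub> evc L" by (simp add: evc_def)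

lemma wf_Cons[simp]: "wf ((c, u) # L) \<longleftrightarrow> set u \<subseteq> gens l \<and> wf L" by (simp add: wf_def)
lemma wf_Nil[simp]: "wf []" by (simp add: wf_def)

lemma evc_closed[simp]: "wf L \<Longrightarrow> evc L \<in> carrier M"
  by (induction L) auto

lemma evc_append: "wf L1 \<Longrightarrow> wf L2 \<Longrightarrow> evc (L1 @ L2) = evc L1 \<oplus>\<^bsub>M\<^esub> evc L2"
  by (induction L1) (auto simp: M.a_assoc)

lemma evc_smult: "wf L \<Longrightarrow> c \<odot>\<^bsub>M\<^esub> evc L = evc (map (\<lambda>(c', u). (c * c', u)) L)"
  by (induction L) (auto simp: smult_r_distr sm_mult)

lemma op_evc: "a \<in> gens l \<Longrightarrow> wf L \<Longrightarrow> op X Y a (evc L) = evc (map (\<lambda>(c, u). (c, a # u)) L)"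
  by (induction L) (auto simp: op_add op_smult)

lemma wf_map_prep: "a \<in> gens l \<Longrightarrow> wf L \<Longrightarrow> wf (map (\<lambda>(c, u). (c, a # u)) L)"
  by (fastforce simp: wf_def simp del: gens_iff)

lemma evc_single[simp]: "set u \<subseteq> gens l \<Longrightarrow> evc [(c, u)] = c \<odot>\<^bsub>M\<^esub> ev X Y u w"
  by simp
lemma wf_map_sc: "wf L \<Longrightarrow> wf (map (\<lambda>(c', u). (f c' u, u)) L)"
  by (auto simp: wf_def)

lemma ann_ev:
  assumes a: "a \<in> gens l" "\<not> crt a" and u: "set u \<subseteq> cre"
  shows "\<exists>L'. op X Y a (ev X Y u w) = evc L' \<and> (\<forall>(c, x) \<in> set L'. set x \<subseteq> cre \<and> length x < length u)"
  using u
proof (induction u)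
  case Nil
  show ?case by (rule exI[of _ "[]"]) (simp add: vac[OF a])
next
  case (Cons d u)
  then obtain L' where L': "op X Y a (ev X Y u w) = evc L'" "\<forall>(c, x) \<in> set L'. set x \<subseteq> cre \<and> length x < length u"
    by auto
  have d: "d \<in> gens l" "d \<in> cre" using Cons.prems cre_def by auto
  have us: "set u \<subseteq> gens l" using Cons.prems by (auto simp: cre_def)
  have wfL': "wf L'" using L'(2) by (auto simp: wf_def cre_def)
  define L'' where "L'' = map (\<lambda>(c', x). (kap Q a d * c', x)) (map (\<lambda>(c, x). (c, d # x)) L') @ [(dlt Q a d, u)]"
  have "op X Y a (ev X Y (d # u) w) = kap Q a d \<odot>\<^bsub>M\<^esub> op X Y d (op X Y a (ev X Y u w)) \<oplus>\<^bsub>M\<^esub> dlt Q a d \<odot>\<^bsub>M\<^esub> ev X Y u w"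
    using comm[OF a(1) d(1), of "ev X Y u w"] us by simp
  also have "\<dots> = evc L''"
  proof -
    have w1: "wf (map (\<lambda>(c, x). (c, d # x)) L')" using wf_map_prep[OF d(1) wfL'] .
    have w2: "wf (map (\<lambda>(c', x). (kap Q a d * c', x)) (map (\<lambda>(c, x). (c, d # x)) L'))"
      using wf_map_sc[OF w1] .
    have "evc L'' = evc (map (\<lambda>(c', x). (kap Q a d * c', x)) (map (\<lambda>(c, x). (c, d # x)) L')) \<oplus>\<^bsub>M\<^esub> evc [(dlt Q a d, u)]"
      unfolding L''_def by (rule evc_append[OF w2]) (simp add: us)
    also have "\<dots> = kap Q a d \<odot>\<^bsub>M\<^esub> op X Y d (evc L') \<oplus>\<^bsub>M\<^esub> dlt Q a d \<odot>\<^bsub>M\<^esub> ev X Y u w"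
      using us w1 wfL' d by (simp add: evc_smult[OF w1] op_evc del: map_map)
    finally show ?thesis using L'(1) by simp
  qed
  finally have eq: "op X Y a (ev X Y (d # u) w) = evc L''" .
  have "\<forall>(c, x) \<in> set L''. set x \<subseteq> cre \<and> length x < length (d # u)"
  proof
    fix p assume "p \<in> set L''"
    then consider (a) c x where "p = (kap Q a d * c, d # x)" "(c, x) \<in> set L'" | (b) "p = (dlt Q a d, u)"
      unfolding L''_def by auto
    then show "case p of (c, x) \<Rightarrow> set x \<subseteq> cre \<and> length x < length (d # u)"
    proof cases
      case a then show ?thesis using L'(2) d(2) by fastforce
    next
      case b then show ?thesis using Cons.prems by simp
    qed
  qed
  then show ?case using eq by blast
qed

lemma ann_evc:
  assumes a: "a \<in> gens l" "\<not> crt a" and L: "okL k L"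
  shows "\<exists>L'. op X Y a (evc L) = evc L' \<and> (\<forall>(c, x) \<in> set L'. set x \<subseteq> cre \<and> length x < k)"
  using L
proof (induction L)
  case Nil
  show ?case by (rule exI[of _ "[]"]) (simp add: a)
next
  case (Cons p L)
  obtain c u where p: "p = (c, u)" by (cases p)
  have u: "set u \<subseteq> cre" "length u \<le> k" and okl: "okL k L" using Cons.prems p by (auto simp: okL_def)
  have ug: "set u \<subseteq> gens l" using u by (auto simp: cre_def)
  obtain L1 where L1: "op X Y a (evc L) = evc L1" "\<forall>(c, x) \<in> set L1. set x \<subseteq> cre \<and> length x < k"
    using Cons.IH okl by auto
  obtain L2 where L2: "op X Y a (ev X Y u w) = evc L2" "\<forall>(c, x) \<in> set L2. set x \<subseteq> cre \<and> length x < length u"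
    using ann_ev[OF a u(1)] by auto
  have wf1: "wf L1" "wf L2" using L1(2) L2(2) by (auto simp: wf_def cre_def)
  have "op X Y a (evc (p # L)) = c \<odot>\<^bsub>M\<^esub> op X Y a (ev X Y u w) \<oplus>\<^bsub>M\<^esub> op X Y a (evc L)"
    using p a ug okL_wf[OF okl] by (simp add: op_add op_smult)
  also have "\<dots> = evc (map (\<lambda>(c', x). (c * c', x)) L2 @ L1)"
    using L1 L2 wf1 by (simp add: evc_smult evc_append wf_map_sc)
  finally show ?case using L1(2) L2(2) u(2)
    by (intro exI[of _ "map (\<lambda>(c', x). (c * c', x)) L2 @ L1"]) auto
qed

lemma okL_append: "okL k1 L1 \<Longrightarrow> okL k2 L2 \<Longrightarrow> okL (max k1 k2) (L1 @ L2)"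
  unfolding okL_def by fastforce

lemma okL_map_sc: "okL k L \<Longrightarrow> okL k (map (\<lambda>(c', u). (f c' u, u)) L)"
  unfolding okL_def by fastforce

lemma SK_carrier: "SK k \<subseteq> carrier M"
  by (auto simp: SK_def dest: okL_wf)

lemma okL_mono: "okL k L \<Longrightarrow> k \<le> k' \<Longrightarrow> okL k' L"
  by (auto simp: okL_def)

lemma union_sub: "AQ_submodule l (\<Union>k. SK k) M X Y"
  unfolding AQ_submodule_def
proof (intro conjI ballI allI)
  show "submodule (\<Union>k. SK k) CC M"
  proof (rule submoduleI)
    show "(\<Union>k. SK k) \<subseteq> carrier M" using SK_carrier by blast
    show "\<zero>\<^bsub>M\<^esub> \<in> (\<Union>k. SK k)" unfolding SK_def
      by (rule UN_I[of 0]) (auto intro!: exI[of _ "[]"] simp: okL_def)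
    show "a \<oplus>\<^bsub>M\<^esub> b \<in> (\<Union>k. SK k)" if ha: "a \<in> (\<Union>k. SK k)" and hb: "b \<in> (\<Union>k. SK k)" for a b
    proof -
      obtain k1 L1 k2 L2 where "a = evc L1" "okL k1 L1" "b = evc L2" "okL k2 L2"
        using ha hb unfolding SK_def by blast
      then show ?thesis unfolding SK_def
        by (intro UN_I[of "max k1 k2"]) (auto simp: okL_append evc_append[symmetric] okL_wf intro!: exI[of _ "L1 @ L2"])
    qed
    show "c \<odot>\<^bsub>M\<^esub> x \<in> (\<Union>k. SK k)" if hx: "x \<in> (\<Union>k. SK k)" for c x
    proof -
      obtain k L where "x = evc L" "okL k L" using hx unfolding SK_def by blast
      then show ?thesis unfolding SK_def
        by (intro UN_I[of k]) (auto simp: okL_map_sc evc_smult okL_wf intro!: exI[of _ "map (\<lambda>(c', u). (c * c', u)) L"])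
    qed
    then show "\<ominus>\<^bsub>M\<^esub> x \<in> (\<Union>k. SK k)" if hx: "x \<in> (\<Union>k. SK k)" for x
    proof -
      have "x \<in> carrier M" using hx SK_carrier by blast
      then have "\<ominus>\<^bsub>M\<^esub> x = (-1) \<odot>\<^bsub>M\<^esub> x" by (rule sm_neg)
      then show ?thesis using \<open>\<And>c x. x \<in> (\<Union>k. SK k) \<Longrightarrow> c \<odot>\<^bsub>M\<^esub> x \<in> (\<Union>k. SK k)\<close>[OF hx] by simp
    qed
  qed
next
  fix i n v assume i: "i \<in> {1..l}" and v: "v \<in> (\<Union>k. SK k)"
  obtain k L where vL: "v = evc L" "okL k L" using v unfolding SK_def by blast
  have opin: "op X Y a v \<in> (\<Union>k. SK k)" if a: "a \<in> gens l" for a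
  proof (cases "crt a")
    case True
    have "op X Y a v = evc (map (\<lambda>(c, u). (c, a # u)) L)" using vL a by (simp add: op_evc okL_wf)
    moreover have "okL (Suc k) (map (\<lambda>(c, u). (c, a # u)) L)" using vL(2) a True unfolding okL_def cre_def
      by (fastforce simp del: gens_iff)
    ultimately show ?thesis by (auto simp: SK_def)
  next
    case False
    obtain L' where "op X Y a (evc L) = evc L'" "\<forall>(c, x) \<in> set L'. set x \<subseteq> cre \<and> length x < k"
      using ann_evc[OF a False vL(2)] by auto
    moreover have "okL k L'" using calculation(2) by (auto simp: okL_def)
    ultimately show ?thesis using vL by (auto simp: SK_def)
  qed
  show "X i n v \<in> (\<Union>k. SK k)" using opin[of "(i, n, True)"] i by (simp add: op_def)
  show "Y i n v \<in> (\<Union>k. SK k)" using opin[of "(i, n, False)"] i by (simp add: op_def)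
qed

lemma carrier_SK: "v \<in> carrier M \<Longrightarrow> \<exists>k L. v = evc L \<and> okL k L"
proof -
  assume v: "v \<in> carrier M"
  have "w \<in> (\<Union>k. SK k)" unfolding SK_def
    by (rule UN_I[of 0]) (auto simp: okL_def intro!: exI[of _ "[(1, [])]"])
  then have "carrier M \<subseteq> (\<Union>k. SK k)" using vm union_sub by (auto simp: vacuum_module_def generates_def)
  then show ?thesis using v unfolding SK_def by blast
qed

end


definition eps :: "(nat \<Rightarrow> nat \<Rightarrow> complex) \<Rightarrow> gen \<Rightarrow> complex" where
  "eps Q a = (case a of (i, m, b) \<Rightarrow> if b then - Q i i else 1)"

context vqm begin

definition Nop :: "gen \<Rightarrow> 'm \<Rightarrow> 'm" where
  "Nop c x = eps Q c \<odot>\<^bsub>M\<^esub> op X Y c (op X Y (partner c) x)"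

definition Tn :: "gen list \<Rightarrow> 'm \<Rightarrow> 'm" where
  "Tn Fl x = foldr (\<lambda>c acc. Nop c x \<oplus>\<^bsub>M\<^esub> acc) Fl \<zero>\<^bsub>M\<^esub>"

lemma Tn_Nil[simp]: "Tn [] x = \<zero>\<^bsub>M\<^esub>" by (simp add: Tn_def)
lemma Tn_Cons[simp]: "Tn (c # Fl) x = Nop c x \<oplus>\<^bsub>M\<^esub> Tn Fl x" by (simp add: Tn_def)

lemma Nop_closed[simp]: "c \<in> gens l \<Longrightarrow> x \<in> carrier M \<Longrightarrow> Nop c x \<in> carrier M"
  by (simp add: Nop_def)
lemma Nop_add: "c \<in> gens l \<Longrightarrow> x \<in> carrier M \<Longrightarrow> y \<in> carrier M \<Longrightarrow> Nop c (x \<oplus>\<^bsub>M\<^esub> y) = Nop c x \<oplus>\<^bsub>M\<^esub> Nop c y"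
  by (simp add: Nop_def op_add smult_r_distr)
lemma Nop_smult: "c \<in> gens l \<Longrightarrow> x \<in> carrier M \<Longrightarrow> Nop c (a \<odot>\<^bsub>M\<^esub> x) = a \<odot>\<^bsub>M\<^esub> Nop c x"
  by (simp add: Nop_def op_smult sm_mult[symmetric] mult.commute)

lemma Tn_closed[simp]: "set Fl \<subseteq> gens l \<Longrightarrow> x \<in> carrier M \<Longrightarrow> Tn Fl x \<in> carrier M"
  by (induction Fl) auto
lemma Tn_add: "set Fl \<subseteq> gens l \<Longrightarrow> x \<in> carrier M \<Longrightarrow> y \<in> carrier M \<Longrightarrow> Tn Fl (x \<oplus>\<^bsub>M\<^esub> y) = Tn Fl x \<oplus>\<^bsub>M\<^esub> Tn Fl y"
  by (induction Fl) (auto simp: Nop_add M.a_ac)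
lemma Tn_smult: "set Fl \<subseteq> gens l \<Longrightarrow> x \<in> carrier M \<Longrightarrow> Tn Fl (a \<odot>\<^bsub>M\<^esub> x) = a \<odot>\<^bsub>M\<^esub> Tn Fl x"
  by (induction Fl) (auto simp: Nop_smult smult_r_distr)

lemma Tn_zero[simp]: "set Fl \<subseteq> gens l \<Longrightarrow> Tn Fl \<zero>\<^bsub>M\<^esub> = \<zero>\<^bsub>M\<^esub>"
  by (induction Fl) (auto simp: Nop_def)

lemma eps_dlt: "c \<in> gens l \<Longrightarrow> eps Q c * dlt Q (partner c) d = (if d = c then 1 else 0)"
  using Qinv by (cases c) (auto simp: eps_def dlt_def partner_def)

lemma Nop_op:
  assumes c: "c \<in> cre" and d: "d \<in> cre" and y: "y \<in> carrier M"
  shows "Nop c (op X Y d y) = op X Y d (Nop c y) \<oplus>\<^bsub>M\<^esub> (if c = d then op X Y d y else \<zero>\<^bsub>M\<^esub>)"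
proof -
  have cg: "c \<in> gens l" "d \<in> gens l" using c d by (auto simp: cre_def)
  have pc: "partner c \<in> gens l" using cg by simp
  have ne: "d \<noteq> partner c" using c d crt_partner[of c] by (auto simp: cre_def)
  have kk: "kap Q (partner c) d * kap Q c d = 1"
    using cg by (intro kap_partner_mult Qinv) (cases c; cases d; auto)+
  have dl0: "dlt Q c d = 0" using ne by (cases c) (auto simp: dlt_def)
  let ?z = "op X Y (partner c) y"
  have zc: "?z \<in> carrier M" using pc y by simp
  have "op X Y c (op X Y (partner c) (op X Y d y))
      = op X Y c (kap Q (partner c) d \<odot>\<^bsub>M\<^esub> op X Y d ?z \<oplus>\<^bsub>M\<^esub> dlt Q (partner c) d \<odot>\<^bsub>M\<^esub> y)"
    using comm[OF pc cg(2) y] by simp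
  also have "\<dots> = kap Q (partner c) d \<odot>\<^bsub>M\<^esub> op X Y c (op X Y d ?z) \<oplus>\<^bsub>M\<^esub> dlt Q (partner c) d \<odot>\<^bsub>M\<^esub> op X Y c y"
    using cg zc y by (simp add: op_add op_smult)
  also have "op X Y c (op X Y d ?z) = kap Q c d \<odot>\<^bsub>M\<^esub> op X Y d (op X Y c ?z)"
    using comm[OF cg zc] dl0 cg zc by simp
  finally have e: "op X Y c (op X Y (partner c) (op X Y d y))
      = op X Y d (op X Y c ?z) \<oplus>\<^bsub>M\<^esub> dlt Q (partner c) d \<odot>\<^bsub>M\<^esub> op X Y c y"
    using kk cg zc by (simp add: sm_mult[symmetric])
  have "Nop c (op X Y d y) = op X Y d (Nop c y) \<oplus>\<^bsub>M\<^esub> (eps Q c * dlt Q (partner c) d) \<odot>\<^bsub>M\<^esub> op X Y c y"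
    unfolding Nop_def e using cg zc y by (simp add: smult_r_distr sm_mult op_smult)
  then show ?thesis using eps_dlt[OF cg(1)] cg y by auto
qed

lemma Tn_op_notin:
  assumes "set Fl \<subseteq> cre" "d \<in> cre" "d \<notin> set Fl" "y \<in> carrier M"
  shows "Tn Fl (op X Y d y) = op X Y d (Tn Fl y)"
  using assms
proof (induction Fl)
  case Nil then show ?case by (simp add: cre_def)
next
  case (Cons c Fl)
  have cg: "c \<in> gens l" "d \<in> gens l" "set Fl \<subseteq> gens l" using Cons.prems by (auto simp: cre_def)
  have "c \<noteq> d" using Cons.prems by auto
  then show ?case using Cons cg by (simp add: Nop_op op_add)
qed

lemma Tn_op_in:
  assumes "distinct Fl" "set Fl \<subseteq> cre" "d \<in> set Fl" "y \<in> carrier M"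
  shows "Tn Fl (op X Y d y) = op X Y d (Tn Fl y) \<oplus>\<^bsub>M\<^esub> op X Y d y"
  using assms
proof (induction Fl)
  case Nil then show ?case by simp
next
  case (Cons c Fl)
  have cg: "c \<in> gens l" "d \<in> gens l" "set Fl \<subseteq> gens l" "d \<in> cre" using Cons.prems by (auto simp: cre_def)
  show ?case
  proof (cases "c = d")
    case True
    then have "d \<notin> set Fl" using Cons.prems by auto
    then have "Tn Fl (op X Y d y) = op X Y d (Tn Fl y)" using Tn_op_notin Cons.prems cg by auto
    then show ?thesis using True Cons.prems cg by (simp add: Nop_op op_add M.a_ac)
  next
    case False
    then have "d \<in> set Fl" using Cons.prems by auto
    then show ?thesis using False Cons cg by (simp add: Nop_op op_add M.a_ac)
  qed
qed

lemma Tn_w: "set Fl \<subseteq> cre \<Longrightarrow> Tn Fl w = \<zero>\<^bsub>M\<^esub>"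
proof (induction Fl)
  case Nil then show ?case by simp
next
  case (Cons c Fl)
  have cg: "c \<in> gens l" "crt c" using Cons.prems by (auto simp: cre_def)
  have "op X Y (partner c) w = \<zero>\<^bsub>M\<^esub>" using vac[of "partner c"] cg crt_partner by simp
  then show ?case using Cons cg by (simp add: Nop_def)
qed

lemma Tn_ev:
  assumes "distinct Fl" "set Fl \<subseteq> cre" "set u \<subseteq> set Fl"
  shows "Tn Fl (ev X Y u w) = of_nat (length u) \<odot>\<^bsub>M\<^esub> ev X Y u w"
  using assms(3)
proof (induction u)
  case Nil then show ?case using Tn_w assms by simp
next
  case (Cons d u)
  have g: "set Fl \<subseteq> gens l" using assms by (auto simp: cre_def)
  have dg: "d \<in> gens l" "d \<in> set Fl" and us: "set u \<subseteq> gens l" using Cons.prems g by auto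
  have "Tn Fl (ev X Y (d # u) w) = op X Y d (Tn Fl (ev X Y u w)) \<oplus>\<^bsub>M\<^esub> op X Y d (ev X Y u w)"
    using Tn_op_in[OF assms(1,2) dg(2)] us by simp
  also have "\<dots> = (of_nat (length u) + 1) \<odot>\<^bsub>M\<^esub> op X Y d (ev X Y u w)"
    using Cons dg us by (simp add: op_smult sm_add)
  finally show ?case by (simp add: add.commute)
qed

lemma Tn_evc:
  assumes "distinct Fl" "set Fl \<subseteq> cre" "\<forall>(c, u) \<in> set L. set u \<subseteq> set Fl"
  shows "Tn Fl (evc L) = evc (map (\<lambda>(c, u). (c * of_nat (length u), u)) L)"
  using assms(3)
proof (induction L)
  case Nil
  have "set Fl \<subseteq> gens l" using assms by (auto simp: cre_def)
  then show ?case by simp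
next
  case (Cons p L)
  obtain c u where p: "p = (c, u)" by (cases p)
  have g: "set Fl \<subseteq> gens l" using assms by (auto simp: cre_def)
  have us: "set u \<subseteq> set Fl" using Cons.prems p by auto
  have wfL: "wf L" using Cons.prems g by (fastforce simp: wf_def)
  show ?case using Cons p us g wfL Tn_ev[OF assms(1,2) us]
    by (auto simp: Tn_add Tn_smult sm_mult mult.commute)
qed

lemma Tn_vacuum:
  assumes "v \<in> carrier M" "\<forall>a\<in>gens l. \<not> crt a \<longrightarrow> op X Y a v = \<zero>\<^bsub>M\<^esub>" "set Fl \<subseteq> cre"
  shows "Tn Fl v = \<zero>\<^bsub>M\<^esub>"
  using assms(3)
proof (induction Fl)
  case Nil then show ?case by simp
next
  case (Cons c Fl)
  have cg: "c \<in> gens l" "crt c" using Cons.prems by (auto simp: cre_def)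
  have "op X Y (partner c) v = \<zero>\<^bsub>M\<^esub>" using assms(2) cg crt_partner by simp
  then show ?case using Cons cg by (simp add: Nop_def)
qed

lemma evc_nil_words: "\<forall>(c, u) \<in> set L. u = [] \<Longrightarrow> evc L = sum_list (map fst L) \<odot>\<^bsub>M\<^esub> w"
  by (induction L) (auto simp: sm_add)

lemma evc_lin: "wf L \<Longrightarrow> evc L \<oplus>\<^bsub>M\<^esub> s \<odot>\<^bsub>M\<^esub> evc (map (\<lambda>(c, u). (c * h u, u)) L)
    = evc (map (\<lambda>(c, u). (c + s * (c * h u), u)) L)"
proof (induction L)
  case Nil then show ?case by simp
next
  case (Cons p L)
  obtain c u where p: "p = (c, u)" by (cases p)
  have us: "set u \<subseteq> gens l" and wfL: "wf L" using Cons.prems p by auto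
  have wf2: "wf (map (\<lambda>(c, u). (c * h u, u)) L)" using wf_map_sc[OF wfL] .
  let ?e = "ev X Y u w"
  have ec: "?e \<in> carrier M" using us by simp
  have "evc (p # L) \<oplus>\<^bsub>M\<^esub> s \<odot>\<^bsub>M\<^esub> evc (map (\<lambda>(c, u). (c * h u, u)) (p # L))
     = (c \<odot>\<^bsub>M\<^esub> ?e \<oplus>\<^bsub>M\<^esub> (s * (c * h u)) \<odot>\<^bsub>M\<^esub> ?e) \<oplus>\<^bsub>M\<^esub>
       (evc L \<oplus>\<^bsub>M\<^esub> s \<odot>\<^bsub>M\<^esub> evc (map (\<lambda>(c, u). (c * h u, u)) L))"
    using p ec wfL wf2 by (simp add: smult_r_distr sm_mult M.a_ac)
  also have "\<dots> = evc (map (\<lambda>(c, u). (c + s * (c * h u), u)) (p # L))"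
    using Cons.IH[OF wfL] p ec by (simp add: sm_add)
  finally show ?case .
qed

lemma evc_filter: "wf L \<Longrightarrow> \<forall>(c, u) \<in> set L. \<not> P (c, u) \<longrightarrow> c = 0 \<Longrightarrow> evc (filter P L) = evc L"
proof (induction L)
  case Nil then show ?case by simp
next
  case (Cons p L)
  obtain c u where p: "p = (c, u)" by (cases p)
  then show ?case using Cons by auto
qed

lemma vac_span:
  assumes Fl: "distinct Fl" "set Fl \<subseteq> cre"
  shows "\<forall>L :: (complex \<times> gen list) list. (\<forall>(c, u) \<in> set L. set u \<subseteq> set Fl \<and> length u \<le> K) \<longrightarrow> Tn Fl (evc L) = \<zero>\<^bsub>M\<^esub>
      \<longrightarrow> (\<exists>c. evc L = c \<odot>\<^bsub>M\<^esub> w)"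
proof (induction K)
  case 0
  show ?case
  proof (intro allI impI)
    fix L :: "(complex \<times> gen list) list" assume "\<forall>(c, u) \<in> set L. set u \<subseteq> set Fl \<and> length u \<le> 0"
    then have "\<forall>(c, u) \<in> set L. u = []" by auto
    then show "\<exists>c. evc L = c \<odot>\<^bsub>M\<^esub> w" using evc_nil_words by blast
  qed
next
  case (Suc K)
  show ?case
  proof (intro allI impI)
    fix L :: "(complex \<times> gen list) list" assume L: "\<forall>(c, u) \<in> set L. set u \<subseteq> set Fl \<and> length u \<le> Suc K" and T: "Tn Fl (evc L) = \<zero>\<^bsub>M\<^esub>"
    have g: "set Fl \<subseteq> gens l" using Fl by (auto simp: cre_def)
    have wfL: "wf L" using L g by (fastforce simp: wf_def)
    define h where "h = (\<lambda>u :: gen list. of_nat (length u) :: complex)"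
    define s where "s = - 1 / (of_nat (Suc K) :: complex)"
    define L1 where "L1 = map (\<lambda>(c, u). (c + s * (c * h u), u)) L"
    have Lf: "\<forall>(c, u) \<in> set L. set u \<subseteq> set Fl" using L by blast
    have T1: "Tn Fl (evc L) = evc (map (\<lambda>(c, u). (c * h u, u)) L)"
      unfolding h_def by (rule Tn_evc[OF Fl Lf])
    have "evc L1 = evc L \<oplus>\<^bsub>M\<^esub> s \<odot>\<^bsub>M\<^esub> Tn Fl (evc L)"
      unfolding L1_def T1 by (rule evc_lin[OF wfL, symmetric])
    then have e1: "evc L1 = evc L" using T wfL by simp
    have wf1: "wf L1" unfolding L1_def using wf_map_sc[OF wfL] .
    define L2 where "L2 = filter (\<lambda>(c, u). length u \<noteq> Suc K) L1"
    have z: "\<forall>(c, u) \<in> set L1. \<not> (\<lambda>(c, u). length u \<noteq> Suc K) (c, u) \<longrightarrow> c = 0"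
    proof -
      have nz: "(of_nat (Suc K) :: complex) \<noteq> 0" by (rule of_nat_neq_0)
      have key: "\<And>c. c + s * (c * of_nat (Suc K)) = 0"
      proof -
        fix c
        show "c + s * (c * of_nat (Suc K)) = 0" unfolding s_def using nz by (simp del: of_nat_Suc)
      qed
      show ?thesis unfolding L1_def h_def using key by (auto simp del: of_nat_Suc)
    qed
    have e2: "evc L2 = evc L" unfolding L2_def using evc_filter[OF wf1 z] e1 by simp
    have L2ok: "\<forall>(c, u) \<in> set L2. set u \<subseteq> set Fl \<and> length u \<le> K"
    proof (intro ballI, clarify)
      fix c u assume cu: "(c, u) \<in> set L2"
      then have c1: "(c, u) \<in> set L1" and lu: "length u \<noteq> Suc K" unfolding L2_def by simp_all
      from c1 have "(c, u) \<in> (\<lambda>(c, u). (c + s * (c * h u), u)) ` set L" unfolding L1_def by simp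
      then obtain p where p: "p \<in> set L" "(c, u) = (\<lambda>(c, u). (c + s * (c * h u), u)) p" by (rule imageE)
      obtain c' u' where p': "p = (c', u')" by (cases p)
      have "u' = u" using p(2) p' by simp
      then have "(c', u) \<in> set L" using p(1) p' by simp
      then have "set u \<subseteq> set Fl" "length u \<le> Suc K" using L by blast+
      then show "set u \<subseteq> set Fl \<and> length u \<le> K" using lu by simp
    qed
    have T2: "Tn Fl (evc L2) = \<zero>\<^bsub>M\<^esub>" using T e2 by simp
    obtain c where "evc L2 = c \<odot>\<^bsub>M\<^esub> w" using Suc.IH L2ok T2 by blast
    then show "\<exists>c. evc L = c \<odot>\<^bsub>M\<^esub> w" using e2 by auto
  qed
qed

lemma vacuum_mult:
  assumes v: "v \<in> carrier M" and ann: "\<forall>a\<in>gens l. \<not> crt a \<longrightarrow> op X Y a v = \<zero>\<^bsub>M\<^esub>"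
  shows "\<exists>c. v = c \<odot>\<^bsub>M\<^esub> w"
proof -
  obtain k L where L: "v = evc L" "okL k L" using carrier_SK[OF v] by blast
  define Fl where "Fl = remdups (concat (map snd L))"
  have Fl: "distinct Fl" "set Fl \<subseteq> cre" using L(2) unfolding Fl_def okL_def by fastforce+
  have Lok: "\<forall>(c, u) \<in> set L. set u \<subseteq> set Fl \<and> length u \<le> k"
  proof (intro ballI, clarify)
    fix c u assume cu: "(c, u) \<in> set L"
    have "u \<in> set (map snd L)" using cu by force
    then have "set u \<subseteq> set Fl" unfolding Fl_def by auto
    moreover have "length u \<le> k" using L(2) cu unfolding okL_def by auto
    ultimately show "set u \<subseteq> set Fl \<and> length u \<le> k" by simp
  qed
  have "Tn Fl v = \<zero>\<^bsub>M\<^esub>" using Tn_vacuum[OF v ann Fl(2)] .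
  then show ?thesis using vac_span[OF Fl, of k] Lok L(1) by blast
qed

lemma sub_zero: "submodule N CC M \<Longrightarrow> \<zero>\<^bsub>M\<^esub> \<in> N"
  using subgroup.one_closed[OF submodule.axioms(1)] by fastforce

theorem irreducible:
  assumes nz: "carrier M \<noteq> {\<zero>\<^bsub>M\<^esub>}"
  shows "AQ_irreducible Q l M X Y"
  unfolding AQ_irreducible_def
proof (intro conjI allI impI)
  show "AQ_module Q l M X Y" by (rule aq)
  show "carrier M \<noteq> {\<zero>\<^bsub>M\<^esub>}" by (rule nz)
  fix N assume N: "AQ_submodule l N M X Y"
  have Nsub: "submodule N CC M" using N by (simp add: AQ_submodule_def)
  have Ncar: "N \<subseteq> carrier M" using submoduleE(1)[OF Nsub] .
  have Nop: "op X Y a x \<in> N" if "a \<in> gens l" "x \<in> N" for a x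
    using N that by (cases a) (auto simp: AQ_submodule_def op_def)
  show "N = {\<zero>\<^bsub>M\<^esub>} \<or> N = carrier M"
  proof (cases "N \<subseteq> {\<zero>\<^bsub>M\<^esub>}")
    case True
    then show ?thesis using sub_zero[OF Nsub] by blast
  next
    case False
    then obtain v0 where v0: "v0 \<in> N" "v0 \<noteq> \<zero>\<^bsub>M\<^esub>" by blast
    define P where "P = (\<lambda>k. \<exists>L :: (complex \<times> gen list) list. okL k L \<and> evc L \<in> N \<and> evc L \<noteq> \<zero>\<^bsub>M\<^esub>)"
    obtain k0 L0 where "v0 = evc L0" "okL k0 L0" using carrier_SK v0 Ncar by blast
    then have Pk0: "P k0" using v0 unfolding P_def by blast
    define k where "k = (LEAST k. P k)"
    have Pk: "P k" unfolding k_def by (rule LeastI[of P k0, OF Pk0])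
    then obtain L where L: "okL k L" "evc L \<in> N" "evc L \<noteq> \<zero>\<^bsub>M\<^esub>" unfolding P_def by blast
    have annz: "\<forall>a\<in>gens l. \<not> crt a \<longrightarrow> op X Y a (evc L) = \<zero>\<^bsub>M\<^esub>"
    proof (intro ballI impI, rule ccontr)
      fix a assume a: "a \<in> gens l" "\<not> crt a" and ne: "op X Y a (evc L) \<noteq> \<zero>\<^bsub>M\<^esub>"
      obtain L' where L': "op X Y a (evc L) = evc L'" "\<forall>(c, x) \<in> set L'. set x \<subseteq> cre \<and> length x < k"
        using ann_evc[OF a L(1)] by blast
      have "L' \<noteq> []" using ne L' by auto
      then have kpos: "k > 0" using L'(2) by (cases L') auto
      have "okL (k - 1) L'" using L'(2) kpos unfolding okL_def by fastforce
      moreover have "evc L' \<in> N" using Nop[OF a(1) L(2)] L'(1) by simp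
      ultimately have "P (k - 1)" using ne L'(1) unfolding P_def by auto
      then have "k \<le> k - 1" unfolding k_def by (rule Least_le)
      then show False using kpos by simp
    qed
    obtain c where c: "evc L = c \<odot>\<^bsub>M\<^esub> w" using vacuum_mult[OF _ annz] L(2) Ncar by blast
    have "c \<noteq> 0" using c L(3) by auto
    then have "w = (1 / c) \<odot>\<^bsub>M\<^esub> evc L" using c by (simp add: sm_mult[symmetric])
    then have "w \<in> N" using submoduleE(4)[OF Nsub, of "1 / c" "evc L"] L(2) by simp
    then have "carrier M \<subseteq> N" using vm N by (auto simp: vacuum_module_def generates_def)
    then show ?thesis using Ncar by blast
  qed
qed

end


lemma rels_FA': "r \<in> rels Q l \<Longrightarrow> r \<in> FA l"
  unfolding rels_def by (auto intro!: fa_add_FA fa_smult_FA fa_word_FA)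

lemma NQ_FA: "n \<in> NQ Q l \<Longrightarrow> n \<in> FA l"
proof (induction rule: NQ.induct)
  case zero then show ?case by simp
next
  case (rel r a b) then show ?case by (simp add: fa_mult_FA rels_FA')
next
  case (ann i m a b)
  have "fa_word [(i, m, b)] \<in> FA l" using ann by (intro fa_word_FA) simp
  then show ?case using ann by (simp add: fa_mult_FA)
next
  case (add f g) then show ?case by (simp add: fa_add_FA)
next
  case (smult f c) then show ?case by (simp add: fa_smult_FA)
qed

lemma NQ_mult_left: "n \<in> NQ Q l \<Longrightarrow> c \<in> FA l \<Longrightarrow> fa_mult c n \<in> NQ Q l"
proof (induction rule: NQ.induct)
  case zero then show ?case by (simp add: NQ.zero)
next
  case (rel r a b)
  have "fa_mult c (fa_mult a (fa_mult r b)) = fa_mult (fa_mult c a) (fa_mult r b)"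
    using rel by (simp add: fa_mult_assoc fa_mult_FA rels_FA')
  then show ?case using rel by (simp add: NQ.rel fa_mult_FA)
next
  case (ann i m a b)
  have "fa_mult c (fa_mult a (fa_word [(i, m, b)])) = fa_mult (fa_mult c a) (fa_word [(i, m, b)])"
    using ann by (simp add: fa_mult_assoc fa_word_FA)
  then show ?case using ann by (simp add: NQ.ann fa_mult_FA)
next
  case (add f g) then show ?case by (simp add: fa_mult_add_right NQ.add)
next
  case (smult f c') then show ?case by (simp add: fa_mult_smult_right NQ.smult)
qed

lemma fa_minus_self: "fa_add f (fa_smult (-1) f) = fa_zero"
  by (auto simp: fa_defs)

lemma NQ_neg: "n \<in> NQ Q l \<Longrightarrow> fa_smult (-1) n \<in> NQ Q l" by (rule NQ.smult)

context
  fixes Q :: "nat \<Rightarrow> nat \<Rightarrow> complex" and l :: nat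
begin

abbreviation "cls \<equiv> vq_class Q l"
abbreviation "eqv f g \<equiv> fa_add f (fa_smult (-1) g) \<in> NQ Q l"

lemma cls_self: "f \<in> FA l \<Longrightarrow> f \<in> cls f"
  by (simp add: vq_class_def fa_minus_self NQ.zero)

lemma eqv_sym: "eqv f g \<Longrightarrow> eqv g f"
proof -
  assume "eqv f g"
  then have "fa_smult (-1) (fa_add f (fa_smult (-1) g)) \<in> NQ Q l" by (rule NQ.smult)
  moreover have "fa_smult (-1) (fa_add f (fa_smult (-1) g)) = fa_add g (fa_smult (-1) f)"
    by (auto simp: fa_defs)
  ultimately show ?thesis by simp
qed

lemma eqv_trans: "eqv f g \<Longrightarrow> eqv g h \<Longrightarrow> eqv f h"
proof -
  assume "eqv f g" "eqv g h"
  then have "fa_add (fa_add f (fa_smult (-1) g)) (fa_add g (fa_smult (-1) h)) \<in> NQ Q l" by (rule NQ.add)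
  moreover have "fa_add (fa_add f (fa_smult (-1) g)) (fa_add g (fa_smult (-1) h)) = fa_add f (fa_smult (-1) h)"
    by (auto simp: fa_defs)
  ultimately show ?thesis by simp
qed

lemma cls_eqI: "f \<in> FA l \<Longrightarrow> g \<in> FA l \<Longrightarrow> eqv f g \<Longrightarrow> cls f = cls g"
  unfolding vq_class_def using eqv_trans eqv_sym by blast

lemma cls_eqD: "f \<in> FA l \<Longrightarrow> g \<in> FA l \<Longrightarrow> cls f = cls g \<Longrightarrow> eqv f g"
proof -
  assume f: "f \<in> FA l" and g: "g \<in> FA l" and e: "cls f = cls g"
  have "f \<in> cls g" using cls_self[OF f] e by simp
  then show ?thesis by (simp add: vq_class_def)
qed

lemma rep_cls: "f \<in> FA l \<Longrightarrow> vq_rep (cls f) \<in> FA l \<and> eqv (vq_rep (cls f)) f"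
proof -
  assume f: "f \<in> FA l"
  have "vq_rep (cls f) \<in> cls f" unfolding vq_rep_def using cls_self[OF f] by (rule someI[of "\<lambda>x. x \<in> cls f"])
  then show ?thesis by (simp add: vq_class_def)
qed

lemma cls_rep: "f \<in> FA l \<Longrightarrow> cls (vq_rep (cls f)) = cls f"
  using rep_cls cls_eqI by blast

lemma VQ_carrier: "carrier (VQ Q l) = cls ` FA l" by (simp add: VQ_def)
lemma VQ_zero: "\<zero>\<^bsub>VQ Q l\<^esub> = cls fa_zero" by (simp add: VQ_def)

lemma eqv_add: "eqv f f' \<Longrightarrow> eqv g g' \<Longrightarrow> eqv (fa_add f g) (fa_add f' g')"
proof -
  assume "eqv f f'" "eqv g g'"
  then have "fa_add (fa_add f (fa_smult (-1) f')) (fa_add g (fa_smult (-1) g')) \<in> NQ Q l" by (rule NQ.add)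
  moreover have "fa_add (fa_add f (fa_smult (-1) f')) (fa_add g (fa_smult (-1) g')) = fa_add (fa_add f g) (fa_smult (-1) (fa_add f' g'))"
    by (auto simp: fa_defs)
  ultimately show ?thesis by simp
qed

lemma eqv_smult: "eqv f f' \<Longrightarrow> eqv (fa_smult c f) (fa_smult c f')"
proof -
  assume "eqv f f'"
  then have "fa_smult c (fa_add f (fa_smult (-1) f')) \<in> NQ Q l" by (rule NQ.smult)
  moreover have "fa_smult c (fa_add f (fa_smult (-1) f')) = fa_add (fa_smult c f) (fa_smult (-1) (fa_smult c f'))"
    by (auto simp: fa_defs right_diff_distrib)
  ultimately show ?thesis by simp
qed

lemma eqv_mult: "x \<in> FA l \<Longrightarrow> eqv f f' \<Longrightarrow> eqv (fa_mult x f) (fa_mult x f')"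
proof -
  assume x: "x \<in> FA l" and "eqv f f'"
  then have "fa_mult x (fa_add f (fa_smult (-1) f')) \<in> NQ Q l" by (simp add: NQ_mult_left)
  then show ?thesis by (simp add: fa_mult_add_right fa_mult_smult_right)
qed

lemma VQ_add_cls: "f \<in> FA l \<Longrightarrow> g \<in> FA l \<Longrightarrow> cls f \<oplus>\<^bsub>VQ Q l\<^esub> cls g = cls (fa_add f g)"
proof -
  assume f: "f \<in> FA l" and g: "g \<in> FA l"
  note rf = rep_cls[OF f] and rg = rep_cls[OF g]
  have "cls f \<oplus>\<^bsub>VQ Q l\<^esub> cls g = cls (fa_add (vq_rep (cls f)) (vq_rep (cls g)))" by (simp add: VQ_def)
  also have "\<dots> = cls (fa_add f g)"
    using rf rg f g by (intro cls_eqI fa_add_FA eqv_add) auto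
  finally show ?thesis .
qed

lemma VQ_smult_cls: "f \<in> FA l \<Longrightarrow> c \<odot>\<^bsub>VQ Q l\<^esub> cls f = cls (fa_smult c f)"
proof -
  assume f: "f \<in> FA l"
  note rf = rep_cls[OF f]
  have "c \<odot>\<^bsub>VQ Q l\<^esub> cls f = cls (fa_smult c (vq_rep (cls f)))" by (simp add: VQ_def)
  also have "\<dots> = cls (fa_smult c f)"
    using rf f by (intro cls_eqI fa_smult_FA eqv_smult) auto
  finally show ?thesis .
qed

lemma mult_cls: "f \<in> FA l \<Longrightarrow> x \<in> FA l \<Longrightarrow> cls (fa_mult x (vq_rep (cls f))) = cls (fa_mult x f)"
  using rep_cls[of f] by (intro cls_eqI fa_mult_FA eqv_mult) auto

lemma VQ_X_cls: "f \<in> FA l \<Longrightarrow> i \<in> {1..l} \<Longrightarrow> VQ_X Q l i n (cls f) = cls (fa_mult (fa_word [(i, n, True)]) f)"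
  unfolding VQ_X_def by (rule mult_cls) (auto intro: fa_word_FA)

lemma VQ_Y_cls: "f \<in> FA l \<Longrightarrow> i \<in> {1..l} \<Longrightarrow> VQ_Y Q l i n (cls f) = cls (fa_mult (fa_word [(i, n, False)]) f)"
  unfolding VQ_Y_def by (rule mult_cls) (auto intro: fa_word_FA)

lemma carrier_VQ_E: "A \<in> carrier (VQ Q l) \<Longrightarrow> (\<And>f. f \<in> FA l \<Longrightarrow> A = cls f \<Longrightarrow> P) \<Longrightarrow> P"
  by (auto simp: VQ_carrier)

lemma cls_in: "f \<in> FA l \<Longrightarrow> cls f \<in> carrier (VQ Q l)"
  by (simp add: VQ_carrier)

lemma module_VQ: "module CC (VQ Q l)"
proof (rule moduleI[OF cring_CC])
  show "abelian_group (VQ Q l)"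
  proof (rule abelian_groupI)
    fix x y z assume x: "x \<in> carrier (VQ Q l)" and y: "y \<in> carrier (VQ Q l)" and z: "z \<in> carrier (VQ Q l)"
    obtain f g h where fgh: "f \<in> FA l" "g \<in> FA l" "h \<in> FA l" "x = cls f" "y = cls g" "z = cls h"
      using x y z by (auto simp: VQ_carrier)
    have e: "fa_add (fa_add f g) h = fa_add f (fa_add g h)" "fa_add f g = fa_add g f" by (auto simp: fa_defs)
    show "x \<oplus>\<^bsub>VQ Q l\<^esub> y \<oplus>\<^bsub>VQ Q l\<^esub> z = x \<oplus>\<^bsub>VQ Q l\<^esub> (y \<oplus>\<^bsub>VQ Q l\<^esub> z)"
      using fgh by (simp add: VQ_add_cls fa_add_FA e(1))
    show "x \<oplus>\<^bsub>VQ Q l\<^esub> y = y \<oplus>\<^bsub>VQ Q l\<^esub> x" using fgh by (simp add: VQ_add_cls e(2))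
  next
    fix x y assume x: "x \<in> carrier (VQ Q l)" and y: "y \<in> carrier (VQ Q l)"
    then show "x \<oplus>\<^bsub>VQ Q l\<^esub> y \<in> carrier (VQ Q l)"
      by (auto simp: VQ_carrier VQ_add_cls fa_add_FA)
  next
    show "\<zero>\<^bsub>VQ Q l\<^esub> \<in> carrier (VQ Q l)" by (simp add: VQ_zero VQ_carrier)
  next
    fix x assume x: "x \<in> carrier (VQ Q l)"
    then obtain f where f: "f \<in> FA l" "x = cls f" by (auto simp: VQ_carrier)
    have e: "fa_add fa_zero f = f" "fa_add (fa_smult (-1) f) f = fa_zero" by (auto simp: fa_defs)
    show "\<zero>\<^bsub>VQ Q l\<^esub> \<oplus>\<^bsub>VQ Q l\<^esub> x = x" using f by (simp add: VQ_zero VQ_add_cls e)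
    show "\<exists>y\<in>carrier (VQ Q l). y \<oplus>\<^bsub>VQ Q l\<^esub> x = \<zero>\<^bsub>VQ Q l\<^esub>"
      using f by (intro bexI[of _ "cls (fa_smult (-1) f)"]) (auto simp: VQ_add_cls fa_smult_FA e VQ_zero VQ_carrier)
  qed
next
  fix a x assume x: "x \<in> carrier (VQ Q l)"
  then show "a \<odot>\<^bsub>VQ Q l\<^esub> x \<in> carrier (VQ Q l)" by (auto simp: VQ_carrier VQ_smult_cls fa_smult_FA)
next
  fix a b x assume x: "x \<in> carrier (VQ Q l)"
  then obtain f where f: "f \<in> FA l" "x = cls f" by (auto simp: VQ_carrier)
  have e: "fa_smult (a \<oplus>\<^bsub>CC\<^esub> b) f = fa_add (fa_smult a f) (fa_smult b f)"
    "fa_smult (a \<otimes>\<^bsub>CC\<^esub> b) f = fa_smult a (fa_smult b f)" "fa_smult \<one>\<^bsub>CC\<^esub> f = f"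
    by (auto simp: fa_defs algebra_simps)
  show "(a \<oplus>\<^bsub>CC\<^esub> b) \<odot>\<^bsub>VQ Q l\<^esub> x = a \<odot>\<^bsub>VQ Q l\<^esub> x \<oplus>\<^bsub>VQ Q l\<^esub> b \<odot>\<^bsub>VQ Q l\<^esub> x"
    using f by (simp only: VQ_smult_cls VQ_add_cls fa_smult_FA e)
  show "(a \<otimes>\<^bsub>CC\<^esub> b) \<odot>\<^bsub>VQ Q l\<^esub> x = a \<odot>\<^bsub>VQ Q l\<^esub> (b \<odot>\<^bsub>VQ Q l\<^esub> x)"
    using f by (simp only: VQ_smult_cls fa_smult_FA e)
next
  fix a x y assume x: "x \<in> carrier (VQ Q l)" and y: "y \<in> carrier (VQ Q l)"
  then obtain f g where f: "f \<in> FA l" "x = cls f" "g \<in> FA l" "y = cls g" by (auto simp: VQ_carrier)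
  have e: "fa_smult a (fa_add f g) = fa_add (fa_smult a f) (fa_smult a g)" by (auto simp: fa_defs algebra_simps)
  show "a \<odot>\<^bsub>VQ Q l\<^esub> (x \<oplus>\<^bsub>VQ Q l\<^esub> y) = a \<odot>\<^bsub>VQ Q l\<^esub> x \<oplus>\<^bsub>VQ Q l\<^esub> a \<odot>\<^bsub>VQ Q l\<^esub> y"
    using f by (simp add: VQ_smult_cls VQ_add_cls fa_smult_FA fa_add_FA e)
next
  fix x assume x: "x \<in> carrier (VQ Q l)"
  then obtain f where f: "f \<in> FA l" "x = cls f" by (auto simp: VQ_carrier)
  have e: "fa_smult \<one>\<^bsub>CC\<^esub> f = f" by (auto simp: fa_defs)
  show "\<one>\<^bsub>CC\<^esub> \<odot>\<^bsub>VQ Q l\<^esub> x = x" using f by (simp only: VQ_smult_cls e)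
qed

end


lemma fa_smult_smult: "fa_smult a (fa_smult b x) = fa_smult (a * b) x"
  by (auto simp: fa_defs)

lemma sub_zero_gen: "submodule N R M \<Longrightarrow> \<zero>\<^bsub>M\<^esub> \<in> N"
  using subgroup.one_closed[OF submodule.axioms(1)] by fastforce

context
  fixes Q :: "nat \<Rightarrow> nat \<Rightarrow> complex" and l :: nat
begin

abbreviation "cls' \<equiv> vq_class Q l"

lemma cls_rel: "r \<in> rels Q l \<Longrightarrow> f \<in> FA l \<Longrightarrow> x \<in> FA l \<Longrightarrow> y \<in> FA l \<Longrightarrow>
    fa_add x (fa_smult (-1) y) = fa_mult r f \<Longrightarrow> cls' x = cls' y"
proof -
  assume r: "r \<in> rels Q l" and f: "f \<in> FA l" and xy: "x \<in> FA l" "y \<in> FA l"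
    and e: "fa_add x (fa_smult (-1) y) = fa_mult r f"
  have "fa_mult (fa_word []) (fa_mult r f) \<in> NQ Q l"
    by (rule NQ.rel[OF r _ f]) (simp add: fa_word_FA)
  then show ?thesis using e xy by (intro cls_eqI) auto
qed

lemma w1FA: "i \<in> {1..l} \<Longrightarrow> fa_word [(i, m, b)] \<in> FA l" by (intro fa_word_FA) simp

lemma w2: "f \<in> FA l \<Longrightarrow> fa_mult (fa_word [a, d]) f = fa_mult (fa_word [a]) (fa_mult (fa_word [d]) f)"
  using fa_mult_word_assoc3[of f l "[a]" "[d]"] by simp

lemma AQ_module_VQ: "AQ_module Q l (VQ Q l) (VQ_X Q l) (VQ_Y Q l)"
  unfolding AQ_module_def
proof (intro conjI ballI allI)
  show "module CC (VQ Q l)" by (rule module_VQ)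
  interpret module CC "VQ Q l" by (rule module_VQ)
  fix i n assume i: "i \<in> {1..l}"
  show "lin_op (VQ Q l) (VQ_X Q l i n)" unfolding lin_op_def
  proof (intro conjI ballI allI)
    fix v assume "v \<in> carrier (VQ Q l)"
    then obtain f where f: "f \<in> FA l" "v = cls' f" by (auto simp: VQ_carrier)
    then show "VQ_X Q l i n v \<in> carrier (VQ Q l)" using i by (simp add: VQ_X_cls cls_in fa_mult_FA w1FA)
    fix c show "VQ_X Q l i n (c \<odot>\<^bsub>VQ Q l\<^esub> v) = c \<odot>\<^bsub>VQ Q l\<^esub> VQ_X Q l i n v"
      using f i by (simp add: VQ_X_cls VQ_smult_cls fa_smult_FA fa_mult_FA w1FA fa_mult_smult_right)
  next
    fix u v assume "u \<in> carrier (VQ Q l)" "v \<in> carrier (VQ Q l)"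
    then obtain f g where f: "f \<in> FA l" "u = cls' f" "g \<in> FA l" "v = cls' g" by (auto simp: VQ_carrier)
    then show "VQ_X Q l i n (u \<oplus>\<^bsub>VQ Q l\<^esub> v) = VQ_X Q l i n u \<oplus>\<^bsub>VQ Q l\<^esub> VQ_X Q l i n v"
      using i by (simp add: VQ_X_cls VQ_add_cls fa_add_FA fa_mult_FA w1FA fa_mult_add_right)
  qed
  show "lin_op (VQ Q l) (VQ_Y Q l i n)" unfolding lin_op_def
  proof (intro conjI ballI allI)
    fix v assume "v \<in> carrier (VQ Q l)"
    then obtain f where f: "f \<in> FA l" "v = cls' f" by (auto simp: VQ_carrier)
    then show "VQ_Y Q l i n v \<in> carrier (VQ Q l)" using i by (simp add: VQ_Y_cls cls_in fa_mult_FA w1FA)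
    fix c show "VQ_Y Q l i n (c \<odot>\<^bsub>VQ Q l\<^esub> v) = c \<odot>\<^bsub>VQ Q l\<^esub> VQ_Y Q l i n v"
      using f i by (simp add: VQ_Y_cls VQ_smult_cls fa_smult_FA fa_mult_FA w1FA fa_mult_smult_right)
  next
    fix u v assume "u \<in> carrier (VQ Q l)" "v \<in> carrier (VQ Q l)"
    then obtain f g where f: "f \<in> FA l" "u = cls' f" "g \<in> FA l" "v = cls' g" by (auto simp: VQ_carrier)
    then show "VQ_Y Q l i n (u \<oplus>\<^bsub>VQ Q l\<^esub> v) = VQ_Y Q l i n u \<oplus>\<^bsub>VQ Q l\<^esub> VQ_Y Q l i n v"
      using i by (simp add: VQ_Y_cls VQ_add_cls fa_add_FA fa_mult_FA w1FA fa_mult_add_right)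
  qed
next
  fix i j m n v assume i: "i \<in> {1..l}" and j: "j \<in> {1..l}" and v: "v \<in> carrier (VQ Q l)"
  then obtain f where f: "f \<in> FA l" "v = cls' f" by (auto simp: VQ_carrier)
  note FAs = fa_mult_FA[OF w1FA[OF i]] fa_mult_FA[OF w1FA[OF j]]
  show "VQ_X Q l i m (VQ_X Q l j n v) = Q i j \<odot>\<^bsub>VQ Q l\<^esub> VQ_X Q l j n (VQ_X Q l i m v)"
  proof -
    let ?r = "fa_add (fa_word [(i, m, True), (j, n, True)]) (fa_smult (- Q i j) (fa_word [(j, n, True), (i, m, True)]))"
    have r: "?r \<in> rels Q l" unfolding rels_def using i j by blast
    have "cls' (fa_mult (fa_word [(i, m, True)]) (fa_mult (fa_word [(j, n, True)]) f))
        = cls' (fa_smult (Q i j) (fa_mult (fa_word [(j, n, True)]) (fa_mult (fa_word [(i, m, True)]) f)))"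
      by (rule cls_rel[OF r f(1)])
         (use f FAs in \<open>simp_all add: fa_smult_FA fa_mult_add_left fa_mult_smult_left w2 fa_smult_smult\<close>)
    then show ?thesis using f i j FAs by (simp add: VQ_X_cls VQ_smult_cls)
  qed
  show "VQ_Y Q l i m (VQ_Y Q l j n v) = Q i j \<odot>\<^bsub>VQ Q l\<^esub> VQ_Y Q l j n (VQ_Y Q l i m v)"
  proof -
    let ?r = "fa_add (fa_word [(i, m, False), (j, n, False)]) (fa_smult (- Q i j) (fa_word [(j, n, False), (i, m, False)]))"
    have r: "?r \<in> rels Q l" unfolding rels_def using i j by blast
    have "cls' (fa_mult (fa_word [(i, m, False)]) (fa_mult (fa_word [(j, n, False)]) f))
        = cls' (fa_smult (Q i j) (fa_mult (fa_word [(j, n, False)]) (fa_mult (fa_word [(i, m, False)]) f)))"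
      by (rule cls_rel[OF r f(1)])
         (use f FAs in \<open>simp_all add: fa_smult_FA fa_mult_add_left fa_mult_smult_left w2 fa_smult_smult\<close>)
    then show ?thesis using f i j FAs by (simp add: VQ_Y_cls VQ_smult_cls)
  qed
  show "VQ_X Q l i m (VQ_Y Q l j n v) = Q j i \<odot>\<^bsub>VQ Q l\<^esub> VQ_Y Q l j n (VQ_X Q l i m v) \<oplus>\<^bsub>VQ Q l\<^esub>
        (if i = j \<and> m + n + 1 = 0 then v else \<zero>\<^bsub>VQ Q l\<^esub>)"
  proof -
    let ?c = "i = j \<and> m + n + 1 = 0"
    let ?r = "fa_add (fa_add (fa_word [(i, m, True), (j, n, False)])
                     (fa_smult (- Q j i) (fa_word [(j, n, False), (i, m, True)])))
             (if ?c then fa_smult (-1) (fa_word []) else fa_zero)"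
    have r: "?r \<in> rels Q l" unfolding rels_def using i j by blast
    let ?a = "fa_mult (fa_word [(i, m, True)]) (fa_mult (fa_word [(j, n, False)]) f)"
    let ?b = "fa_mult (fa_word [(j, n, False)]) (fa_mult (fa_word [(i, m, True)]) f)"
    have bF: "?b \<in> FA l" using FAs f by simp
    have e1: "fa_mult ?r f = fa_add (fa_add ?a (fa_smult (- Q j i) ?b)) (if ?c then fa_smult (-1) f else fa_zero)"
    proof (cases ?c)
      case True
      show ?thesis unfolding if_P[OF True] using f(1) by (simp add: fa_mult_add_left fa_mult_smult_left w2)
    next
      case False
      show ?thesis unfolding if_not_P[OF False] using f(1) by (simp add: fa_mult_add_left fa_mult_smult_left w2)
    qed
    have e: "fa_add ?a (fa_smult (-1) (fa_add (fa_smult (Q j i) ?b) (if ?c then f else fa_zero))) = fa_mult ?r f"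
    proof (cases ?c)
      case True
      show ?thesis by (subst e1, unfold if_P[OF True]) (auto simp: fa_defs)
    next
      case False
      show ?thesis by (subst e1, unfold if_not_P[OF False]) (auto simp: fa_defs)
    qed
    have "cls' ?a = cls' (fa_add (fa_smult (Q j i) ?b) (if ?c then f else fa_zero))"
      by (rule cls_rel[OF r f(1) _ _ e]) (use f FAs bF in \<open>auto simp: fa_add_FA fa_smult_FA\<close>)
    moreover have "(if ?c then v else \<zero>\<^bsub>VQ Q l\<^esub>) = cls' (if ?c then f else fa_zero)"
      using f by (simp add: VQ_zero)
    ultimately show ?thesis using f i j FAs bF
      by (simp add: VQ_X_cls VQ_Y_cls VQ_smult_cls VQ_add_cls fa_smult_FA)
  qed
qed

lemma vacuum_VQ: "is_vacuum l (VQ Q l) (VQ_X Q l) (VQ_Y Q l) (VQ_vac Q l)"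
  unfolding is_vacuum_def
proof (intro conjI ballI allI impI)
  show "VQ_vac Q l \<in> carrier (VQ Q l)" by (simp add: VQ_vac_def cls_in fa_word_FA)
  fix i :: nat and m :: int assume i: "i \<in> {1..l}" and m: "m \<ge> 0"
  have e: "\<And>b. fa_mult (fa_word [(i, m, b)]) (fa_word []) = fa_word [(i, m, b)]"
    using fa_mult_word_word[of "[(i, m, _)]" "[]"] by simp
  have z: "\<And>b. cls' (fa_word [(i, m, b)]) = cls' fa_zero"
  proof -
    fix b
    have "fa_mult (fa_word []) (fa_word [(i, m, b)]) \<in> NQ Q l"
      by (rule NQ.ann[OF i m]) (simp add: fa_word_FA)
    moreover have "fa_add (fa_word [(i, m, b)]) (fa_smult (-1) fa_zero) = fa_word [(i, m, b)]"
      by (auto simp: fa_defs)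
    ultimately show "cls' (fa_word [(i, m, b)]) = cls' fa_zero"
      using i w1FA[OF i] by (intro cls_eqI) auto
  qed
  show "VQ_X Q l i m (VQ_vac Q l) = \<zero>\<^bsub>VQ Q l\<^esub>"
    using i by (simp add: VQ_vac_def VQ_X_cls fa_word_FA e z VQ_zero)
  show "VQ_Y Q l i m (VQ_vac Q l) = \<zero>\<^bsub>VQ Q l\<^esub>"
    using i by (simp add: VQ_vac_def VQ_Y_cls fa_word_FA e z VQ_zero)
qed

lemma generates_VQ: "generates l (VQ Q l) (VQ_X Q l) (VQ_Y Q l) (VQ_vac Q l)"
  unfolding generates_def
proof (intro allI impI subsetI)
  interpret module CC "VQ Q l" by (rule module_VQ)
  fix N A assume N: "AQ_submodule l N (VQ Q l) (VQ_X Q l) (VQ_Y Q l) \<and> VQ_vac Q l \<in> N"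
    and A: "A \<in> carrier (VQ Q l)"
  have Ns: "submodule N CC (VQ Q l)" using N by (simp add: AQ_submodule_def)
  have words: "set u \<subseteq> gens l \<Longrightarrow> cls' (fa_word u) \<in> N" for u
  proof (induction u)
    case Nil then show ?case using N by (simp add: VQ_vac_def)
  next
    case (Cons a u)
    obtain i m b where a: "a = (i, m, b)" by (cases a)
    have i: "i \<in> {1..l}" and us: "set u \<subseteq> gens l" using Cons.prems a by auto
    have e: "fa_mult (fa_word [a]) (fa_word u) = fa_word (a # u)" using fa_mult_word_word[of "[a]" u] by simp
    have IH: "cls' (fa_word u) \<in> N" using Cons.IH us by simp
    show ?case
    proof (cases b)
      case True
      have "VQ_X Q l i m (cls' (fa_word u)) \<in> N" using N IH i by (simp add: AQ_submodule_def)
      then show ?thesis using i us a True e by (simp add: VQ_X_cls fa_word_FA)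
    next
      case False
      have "VQ_Y Q l i m (cls' (fa_word u)) \<in> N" using N IH i by (simp add: AQ_submodule_def)
      then show ?thesis using i us a False e by (simp add: VQ_Y_cls fa_word_FA)
    qed
  qed
  obtain f where f: "f \<in> FA l" "A = cls' f" using A by (auto simp: VQ_carrier)
  have "cls' f \<in> N" using f(1)
  proof (induction f rule: FA_induct)
    case zero then show ?case using sub_zero_gen[OF Ns] by (simp add: VQ_zero)
  next
    case (step c u g)
    have "c \<odot>\<^bsub>VQ Q l\<^esub> cls' (fa_word u) \<oplus>\<^bsub>VQ Q l\<^esub> cls' g \<in> N"
      using submoduleE(4)[OF Ns] submoduleE(5)[OF Ns] words[OF step(1)] step by simp
    then show ?case using step by (simp add: VQ_smult_cls VQ_add_cls fa_word_FA fa_smult_FA)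
  qed
  then show "A \<in> N" using f by simp
qed

end


type_synonym st = "gen \<Rightarrow> nat"

definition inc :: "gen \<Rightarrow> st \<Rightarrow> st" where "inc a n = n(a := Suc (n a))"
definition dec :: "gen \<Rightarrow> st \<Rightarrow> st" where "dec a n = n(a := n a - 1)"

definition good :: "(nat \<Rightarrow> nat \<Rightarrow> complex) \<Rightarrow> nat \<Rightarrow> st \<Rightarrow> bool" where
  "good Q l n \<longleftrightarrow> finite {g. n g \<noteq> 0} \<and> (\<forall>g. n g \<noteq> 0 \<longrightarrow> g \<in> gens l)
     \<and> (\<forall>g. Q (fst g) (fst g) \<noteq> 1 \<longrightarrow> n g \<le> 1)"

definition th :: "(nat \<Rightarrow> nat \<Rightarrow> complex) \<Rightarrow> gen \<Rightarrow> st \<Rightarrow> complex" where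
  "th Q a n = (\<Prod>g\<in>{g. n g \<noteq> 0}. if g < a then kap Q a g ^ n g else 1)"

definition nu :: "(nat \<Rightarrow> nat \<Rightarrow> complex) \<Rightarrow> gen \<Rightarrow> nat \<Rightarrow> complex" where
  "nu Q a k = eps Q a * (\<Sum>j<k. Q (fst a) (fst a) ^ j)"

lemma nu_0[simp]: "nu Q a 0 = 0" by (simp add: nu_def)
lemma nu_Suc: "nu Q a (Suc k) = eps Q a + Q (fst a) (fst a) * nu Q a k"
  unfolding nu_def by (subst sum.lessThan_Suc_shift) (simp add: sum_distrib_left algebra_simps)

lemma inc_same[simp]: "inc a n a = Suc (n a)" by (simp add: inc_def)
lemma inc_other[simp]: "b \<noteq> a \<Longrightarrow> inc a n b = n b" by (simp add: inc_def)
lemma dec_same[simp]: "dec a n a = n a - 1" by (simp add: dec_def)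
lemma dec_other[simp]: "b \<noteq> a \<Longrightarrow> dec a n b = n b" by (simp add: dec_def)
lemma dec_inc[simp]: "dec a (inc a n) = n" by (auto simp: dec_def inc_def)
lemma inc_dec: "0 < n a \<Longrightarrow> inc a (dec a n) = n" by (auto simp: dec_def inc_def)
lemma inc_dec_comm: "a \<noteq> d \<Longrightarrow> dec d (inc a n) = inc a (dec d n)" by (auto simp: dec_def inc_def fun_eq_iff)
lemma dec_dec_comm: "a \<noteq> d \<Longrightarrow> dec d (dec a n) = dec a (dec d n)" by (auto simp: dec_def fun_eq_iff)
lemma inc_inc_comm: "a \<noteq> d \<Longrightarrow> inc d (inc a n) = inc a (inc d n)" by (auto simp: inc_def fun_eq_iff)

lemma fin_inc: "finite {g. n g \<noteq> 0} \<Longrightarrow> finite {g. inc a n g \<noteq> 0}"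
proof -
  assume f: "finite {g. n g \<noteq> 0}"
  have "{g. inc a n g \<noteq> 0} \<subseteq> insert a {g. n g \<noteq> 0}" by (auto simp: inc_def)
  then show ?thesis using f finite_subset by auto
qed
lemma fin_dec: "finite {g. n g \<noteq> 0} \<Longrightarrow> finite {g. dec a n g \<noteq> 0}"
proof -
  assume f: "finite {g. n g \<noteq> 0}"
  have "{g. dec a n g \<noteq> 0} \<subseteq> {g. n g \<noteq> 0}" by (auto simp: dec_def)
  then show ?thesis using f finite_subset by auto
qed

lemma good_dec: "good Q l n \<Longrightarrow> good Q l (dec a n)"
  unfolding good_def
proof (intro conjI allI impI)
  fix g
  assume "finite {g. n g \<noteq> 0} \<and> (\<forall>g. n g \<noteq> 0 \<longrightarrow> g \<in> gens l) \<and> (\<forall>g. Q (fst g) (fst g) \<noteq> 1 \<longrightarrow> n g \<le> 1)"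
  then have h: "finite {g. n g \<noteq> 0}" "\<And>g. n g \<noteq> 0 \<Longrightarrow> g \<in> gens l" "\<And>g. Q (fst g) (fst g) \<noteq> 1 \<Longrightarrow> n g \<le> 1"
    by blast+
  show "finite {g. dec a n g \<noteq> 0}" using fin_dec[OF h(1)] .
  have le: "dec a n g \<le> n g" by (cases "g = a") auto
  show "dec a n g \<noteq> 0 \<Longrightarrow> g \<in> gens l" using h(2)[of g] le by auto
  show "Q (fst g) (fst g) \<noteq> 1 \<Longrightarrow> dec a n g \<le> 1" using h(3)[of g] le by auto
qed

lemma good_inc: "a \<in> gens l \<Longrightarrow> good Q l (inc a n) \<longleftrightarrow> good Q l n \<and> (Q (fst a) (fst a) \<noteq> 1 \<longrightarrow> n a = 0)"
proof
  assume a: "a \<in> gens l" and g: "good Q l (inc a n)"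
  have "{g. n g \<noteq> 0} \<subseteq> {g. inc a n g \<noteq> 0}" by (auto simp: inc_def)
  then have fin: "finite {g. n g \<noteq> 0}" using g finite_subset by (auto simp: good_def)
  have le: "\<And>g. n g \<le> inc a n g" by (case_tac "g = a") auto
  have h2: "\<And>g. inc a n g \<noteq> 0 \<Longrightarrow> g \<in> gens l" and h3: "\<And>g. Q (fst g) (fst g) \<noteq> 1 \<Longrightarrow> inc a n g \<le> 1"
    using g unfolding good_def by blast+
  moreover have "\<forall>g. n g \<noteq> 0 \<longrightarrow> g \<in> gens l"
  proof (intro allI impI)
    fix g assume "n g \<noteq> 0" then have "inc a n g \<noteq> 0" using le[of g] by linarith
    then show "g \<in> gens l" by (rule h2)
  qed
  moreover have "\<forall>g. Q (fst g) (fst g) \<noteq> 1 \<longrightarrow> n g \<le> 1" using h3 le le_trans by blast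
  moreover have "Q (fst a) (fst a) \<noteq> 1 \<longrightarrow> n a = 0" using h3[of a] by simp
  ultimately show "good Q l n \<and> (Q (fst a) (fst a) \<noteq> 1 \<longrightarrow> n a = 0)" using fin by (simp add: good_def)
next
  assume a: "a \<in> gens l" and g: "good Q l n \<and> (Q (fst a) (fst a) \<noteq> 1 \<longrightarrow> n a = 0)"
  show "good Q l (inc a n)" unfolding good_def
  proof (intro conjI allI impI)
    show "finite {g. inc a n g \<noteq> 0}" using g fin_inc by (auto simp: good_def)
    fix b
    have h2: "\<And>g. n g \<noteq> 0 \<Longrightarrow> g \<in> gens l" and h3: "\<And>g. Q (fst g) (fst g) \<noteq> 1 \<Longrightarrow> n g \<le> 1"
      using g unfolding good_def by blast+
    show "inc a n b \<noteq> 0 \<Longrightarrow> b \<in> gens l" using h2[of b] a by (cases "b = a") auto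
    show "Q (fst b) (fst b) \<noteq> 1 \<Longrightarrow> inc a n b \<le> 1" using h3[of b] g by (cases "b = a") auto
  qed
qed

lemma good_inc_mono: "good Q l (inc a n) \<Longrightarrow> good Q l n"
proof -
  assume g: "good Q l (inc a n)"
  have "n = dec a (inc a n)" by simp
  then show ?thesis using good_dec[OF g] by metis
qed

lemma th_superset:
  assumes "finite T" "{g. n g \<noteq> 0} \<subseteq> T"
  shows "th Q a n = (\<Prod>g\<in>T. if g < a then kap Q a g ^ n g else 1)"
  unfolding th_def by (rule prod.mono_neutral_left) (use assms in auto)

lemma th_inc:
  assumes f: "finite {g. n g \<noteq> 0}" and ba: "b \<noteq> a"
  shows "th Q a (inc b n) = th Q a n * (if b < a then kap Q a b else 1)"
proof -
  define T where "T = insert b {g. n g \<noteq> 0}"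
  have T: "finite T" using f by (simp add: T_def)
  have bT: "b \<in> T" by (simp add: T_def)
  have s1: "{g. n g \<noteq> 0} \<subseteq> T" and s2: "{g. inc b n g \<noteq> 0} \<subseteq> T" by (auto simp: T_def inc_def)
  let ?t = "\<lambda>m g. if g < a then kap Q a g ^ m g else 1"
  have "th Q a (inc b n) = (\<Prod>g\<in>T. ?t (inc b n) g)" by (rule th_superset[OF T s2])
  also have "\<dots> = ?t (inc b n) b * (\<Prod>g\<in>T - {b}. ?t (inc b n) g)" by (rule prod.remove[OF T bT])
  also have "(\<Prod>g\<in>T - {b}. ?t (inc b n) g) = (\<Prod>g\<in>T - {b}. ?t n g)"
    by (rule prod.cong) auto
  also have "?t (inc b n) b = ?t n b * (if b < a then kap Q a b else 1)" by simp
  finally have "th Q a (inc b n) = (?t n b * (\<Prod>g\<in>T - {b}. ?t n g)) * (if b < a then kap Q a b else 1)"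
    by (simp add: ac_simps)
  also have "?t n b * (\<Prod>g\<in>T - {b}. ?t n g) = th Q a n"
    using th_superset[OF T s1] prod.remove[OF T bT, of "?t n"] by simp
  finally show ?thesis .
qed

lemma th_self:
  assumes f: "finite {g. n g \<noteq> 0}"
  shows "th Q a (n(a := k)) = th Q a n"
proof -
  define T where "T = insert a {g. n g \<noteq> 0}"
  have T: "finite T" using f by (simp add: T_def)
  have s1: "{g. n g \<noteq> 0} \<subseteq> T" and s2: "{g. (n(a := k)) g \<noteq> 0} \<subseteq> T" by (auto simp: T_def)
  show ?thesis unfolding th_superset[OF T s1] th_superset[OF T s2] by (rule prod.cong) auto
qed

lemma th_inc_self: "finite {g. n g \<noteq> 0} \<Longrightarrow> th Q a (inc a n) = th Q a n"
  unfolding inc_def by (rule th_self)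
lemma th_dec_self: "finite {g. n g \<noteq> 0} \<Longrightarrow> th Q a (dec a n) = th Q a n"
  unfolding dec_def by (rule th_self)


definition Fop :: "(nat \<Rightarrow> nat \<Rightarrow> complex) \<Rightarrow> nat \<Rightarrow> gen \<Rightarrow> (st \<Rightarrow> complex) \<Rightarrow> st \<Rightarrow> complex" where
  "Fop Q l a f n = (if \<not> good Q l n then 0 else if crt a then (if 0 < n a then th Q a (dec a n) * f (dec a n) else 0)
     else nu Q (partner a) (Suc (n (partner a))) * inverse (th Q (partner a) n) * f (inc (partner a) n))"

definition FC :: "(nat \<Rightarrow> nat \<Rightarrow> complex) \<Rightarrow> nat \<Rightarrow> (st \<Rightarrow> complex) set" where
  "FC Q l = {f. \<forall>n. \<not> good Q l n \<longrightarrow> f n = 0}"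

locale fock =
  fixes Q :: "nat \<Rightarrow> nat \<Rightarrow> complex" and l :: nat
  assumes Qinv: "\<And>i j. i \<in> {1..l} \<Longrightarrow> j \<in> {1..l} \<Longrightarrow> Q i j * Q j i = 1"
begin

abbreviation "F \<equiv> Fop Q l"
abbreviation "gd \<equiv> good Q l"

lemma gens_fst: "a \<in> gens l \<Longrightarrow> fst a \<in> {1..l}" by (cases a) auto

lemma Qii: "i \<in> {1..l} \<Longrightarrow> Q i i = 1 \<or> Q i i = -1"
proof -
  assume i: "i \<in> {1..l}"
  have "Q i i * Q i i = 1" using Qinv[OF i i] .
  then have "(Q i i - 1) * (Q i i + 1) = 0" by (simp add: algebra_simps)
  then show ?thesis by (auto simp: eq_neg_iff_add_eq_0)
qed

lemma kap_inv: "a \<in> gens l \<Longrightarrow> d \<in> gens l \<Longrightarrow> kap Q a d * kap Q d a = 1"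
  using Qinv by (cases a; cases d) (auto simp: kap_def mult.commute)
lemma kap_nz: "a \<in> gens l \<Longrightarrow> d \<in> gens l \<Longrightarrow> kap Q a d \<noteq> 0"
  using kap_inv by fastforce
lemma kap_inverse: "a \<in> gens l \<Longrightarrow> d \<in> gens l \<Longrightarrow> inverse (kap Q a d) = kap Q d a"
  using kap_inv by (simp add: inverse_unique)
lemma kap_pl: "a \<in> gens l \<Longrightarrow> d \<in> gens l \<Longrightarrow> kap Q (partner a) d = inverse (kap Q a d)"
proof -
  assume a: "a \<in> gens l" and d: "d \<in> gens l"
  have "kap Q (partner a) d * kap Q a d = 1"
    using a d by (intro kap_partner_mult Qinv) (cases a; cases d; auto)+
  then show ?thesis by (metis inverse_unique mult.commute)
qed
lemma kap_pr: "a \<in> gens l \<Longrightarrow> d \<in> gens l \<Longrightarrow> kap Q a (partner d) = inverse (kap Q a d)"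
proof -
  assume a: "a \<in> gens l" and d: "d \<in> gens l"
  have "kap Q a (partner d) * kap Q a d = 1"
    using a d Qinv by (cases a; cases d) (auto simp: kap_def partner_def mult.commute)
  then show ?thesis by (metis inverse_unique mult.commute)
qed
lemma kap_self: "kap Q a a = Q (fst a) (fst a)" by (cases a) (simp add: kap_def)
lemma kap_pself: "kap Q (partner a) a = Q (fst a) (fst a)" "kap Q a (partner a) = Q (fst a) (fst a)"
  by (cases a; simp add: kap_def partner_def)+
lemma fst_partner[simp]: "fst (partner a) = fst a" by (cases a) (simp add: partner_def)
lemma partner_neq: "partner a \<noteq> a" by (cases a) (simp add: partner_def)
lemma dlt_other: "d \<noteq> partner a \<Longrightarrow> dlt Q a d = 0" by (cases a) (simp add: dlt_def)
lemma dlt_partner: "dlt Q a (partner a) = eps Q (partner a)"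
  by (cases a) (simp add: dlt_def eps_def partner_def)
lemma eps_partner: "a \<in> gens l \<Longrightarrow> eps Q (partner a) = - Q (fst a) (fst a) * eps Q a"
  using Qinv by (cases a) (auto simp: eps_def partner_def)

lemma good_fin: "gd n \<Longrightarrow> finite {g. n g \<noteq> 0}" by (simp add: good_def)

lemma th_nz: "gd n \<Longrightarrow> a \<in> gens l \<Longrightarrow> th Q a n \<noteq> 0"
proof -
  assume g: "gd n" and a: "a \<in> gens l"
  have sg: "\<And>x. n x \<noteq> 0 \<Longrightarrow> x \<in> gens l" using g unfolding good_def by blast
  have "\<forall>x\<in>{g. n g \<noteq> 0}. (if x < a then kap Q a x ^ n x else 1) \<noteq> 0"
    using kap_nz[OF a] sg by auto
  then have "\<not> (\<exists>x\<in>{g. n g \<noteq> 0}. (if x < a then kap Q a x ^ n x else 1) = 0)" by blast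
  then show ?thesis by (simp only: th_def prod_zero_iff[OF good_fin[OF g]]) simp
qed

lemma F_bad: "\<not> gd n \<Longrightarrow> F a g n = 0" by (simp add: Fop_def)
lemma F_cre: "gd n \<Longrightarrow> crt a \<Longrightarrow> F a g n = (if 0 < n a then th Q a (dec a n) * g (dec a n) else 0)"
  by (simp add: Fop_def)
lemma FC_bad: "f \<in> FC Q l \<Longrightarrow> \<not> gd n \<Longrightarrow> f n = 0" by (simp add: FC_def)
lemma F_FC: "F a g \<in> FC Q l" by (simp add: FC_def Fop_def)
lemma F_ann: "f \<in> FC Q l \<Longrightarrow> \<not> crt a \<Longrightarrow>
    F a f n = nu Q (partner a) (Suc (n (partner a))) * inverse (th Q (partner a) n) * f (inc (partner a) n)"
proof (cases "gd n")
  case False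
  assume f: "f \<in> FC Q l"
  have "\<not> gd (inc (partner a) n)" using False good_inc_mono by blast
  then show ?thesis using False f by (simp add: F_bad FC_bad)
qed (simp add: Fop_def)

end


context fock begin

lemma cre_not_partner: "crt a \<Longrightarrow> crt d \<Longrightarrow> d \<noteq> partner a"
  using crt_partner by metis

lemma comm_cc:
  assumes a: "a \<in> gens l" "crt a" and d: "d \<in> gens l" "crt d" and n: "gd n" and f: "f \<in> FC Q l"
  shows "F a (F d f) n = kap Q a d * F d (F a f) n + dlt Q a d * f n"
proof -
  have dl: "dlt Q a d = 0" using cre_not_partner[OF a(2) d(2)] by (rule dlt_other)
  have fin: "finite {g. n g \<noteq> 0}" using good_fin[OF n] .
  show ?thesis
  proof (cases "a = d")
    case True
    have fa: "fst a \<in> {1..l}" using a gens_fst by blast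
    show ?thesis
    proof (cases "Q (fst a) (fst a) = 1")
      case True
      then show ?thesis using \<open>a = d\<close> dl by (simp add: kap_self)
    next
      case False
      then have le: "n a \<le> 1" using n unfolding good_def by blast
      have z: "F a (F a f) n = 0"
        using le n a by (simp add: F_cre good_dec)
      show ?thesis using z \<open>a = d\<close> dl by simp
    qed
  next
    case False
    show ?thesis
    proof (cases "n a = 0 \<or> n d = 0")
      case True
      have "F a (F d f) n = 0" using True n a d False by (auto simp: F_cre good_dec)
      moreover have "F d (F a f) n = 0" using True n a d False by (auto simp: F_cre good_dec)
      ultimately show ?thesis using dl by simp
    next
      case nz: False
      define m where "m = dec a (dec d n)"
      have m1: "dec d (dec a n) = m" unfolding m_def using False by (simp add: dec_dec_comm)
      have m2: "dec a n = inc d m"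
      proof -
        have "0 < dec a n d" using nz False by simp
        then have "inc d (dec d (dec a n)) = dec a n" by (rule inc_dec)
        then show ?thesis using m1 by simp
      qed
      have m3: "dec d n = inc a m"
      proof -
        have "0 < dec d n a" using nz False by simp
        then have "inc a (dec a (dec d n)) = dec d n" by (rule inc_dec)
        then show ?thesis unfolding m_def by simp
      qed
      have finm: "finite {g. m g \<noteq> 0}" unfolding m_def using fin fin_dec by blast
      have gA: "gd (dec a n)" "gd (dec d n)" using n good_dec by blast+
      have L: "F a (F d f) n = th Q a (dec a n) * (th Q d m * f m)"
        using nz False n gA a d m1 by (simp add: F_cre)
      have R: "F d (F a f) n = th Q d (dec d n) * (th Q a m * f m)"
        using nz False n gA a d unfolding m_def by (simp add: F_cre)
      have t1: "th Q a (dec a n) = th Q a m * (if d < a then kap Q a d else 1)"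
        unfolding m2 using th_inc[OF finm, of d a] False by simp
      have t2: "th Q d (dec d n) = th Q d m * (if a < d then kap Q d a else 1)"
        unfolding m3 using th_inc[OF finm, of a d] False by simp
      have ki: "kap Q a d * kap Q d a = 1" using kap_inv[OF a(1) d(1)] .
      show ?thesis
      proof (cases "d < a")
        case True
        then have "\<not> a < d" by simp
        then show ?thesis using True L R t1 t2 dl by (simp add: ac_simps)
      next
        case False
        then have ad: "a < d" using \<open>a \<noteq> d\<close> by simp
        have "kap Q a d * F d (F a f) n = (kap Q a d * kap Q d a) * (th Q d m * (th Q a m * f m))"
          using R t2 ad by (simp add: ac_simps)
        then show ?thesis using ki L t1 False dl by (simp add: ac_simps)
      qed
    qed
  qed
qed

end


context fock begin

lemma partner_inj: "partner a = partner d \<Longrightarrow> a = d"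
  by (metis partner_partner)

lemma comm_aa:
  assumes a: "a \<in> gens l" "\<not> crt a" and d: "d \<in> gens l" "\<not> crt d" and n: "gd n" and f: "f \<in> FC Q l"
  shows "F a (F d f) n = kap Q a d * F d (F a f) n + dlt Q a d * f n"
proof -
  define \<alpha> where "\<alpha> = partner a"
  define \<beta> where "\<beta> = partner d"
  have ga: "\<alpha> \<in> gens l" "\<beta> \<in> gens l" using a d by (simp_all add: \<alpha>_def \<beta>_def)
  have dl: "dlt Q a d = 0"
  proof (rule dlt_other)
    show "d \<noteq> partner a" using a(2) d(2) crt_partner[of a] by auto
  qed
  have fin: "finite {g. n g \<noteq> 0}" using good_fin[OF n] .
  have L: "F a (F d f) n = nu Q \<alpha> (Suc (n \<alpha>)) * inverse (th Q \<alpha> n) *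
      (nu Q \<beta> (Suc (inc \<alpha> n \<beta>)) * inverse (th Q \<beta> (inc \<alpha> n)) * f (inc \<beta> (inc \<alpha> n)))"
    using a d f F_FC by (simp add: F_ann \<alpha>_def \<beta>_def)
  have R: "F d (F a f) n = nu Q \<beta> (Suc (n \<beta>)) * inverse (th Q \<beta> n) *
      (nu Q \<alpha> (Suc (inc \<beta> n \<alpha>)) * inverse (th Q \<alpha> (inc \<beta> n)) * f (inc \<alpha> (inc \<beta> n)))"
    using a d f F_FC by (simp add: F_ann \<alpha>_def \<beta>_def)
  show ?thesis
  proof (cases "\<alpha> = \<beta>")
    case True
    then have ad: "a = d" unfolding \<alpha>_def \<beta>_def by (rule partner_inj)
    show ?thesis
    proof (cases "Q (fst a) (fst a) = 1")
      case True
      then show ?thesis using ad dl by (simp add: kap_self)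
    next
      case False
      have "\<not> gd (inc \<alpha> (inc \<alpha> n))" using good_inc[OF ga(1)] False by (simp add: \<alpha>_def)
      then have "f (inc \<alpha> (inc \<alpha> n)) = 0" using f FC_bad by blast
      then have "F a (F a f) n = 0" using L ad \<open>\<alpha> = \<beta>\<close> by simp
      then show ?thesis using ad dl by simp
    qed
  next
    case False
    have e1: "inc \<alpha> n \<beta> = n \<beta>" "inc \<beta> n \<alpha> = n \<alpha>" using False by auto
    have e2: "inc \<alpha> (inc \<beta> n) = inc \<beta> (inc \<alpha> n)" using False by (simp add: inc_inc_comm)
    have t1: "th Q \<beta> (inc \<alpha> n) = th Q \<beta> n * (if \<alpha> < \<beta> then kap Q \<beta> \<alpha> else 1)"
      using th_inc[OF fin] False by simp
    have t2: "th Q \<alpha> (inc \<beta> n) = th Q \<alpha> n * (if \<beta> < \<alpha> then kap Q \<alpha> \<beta> else 1)"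
      using th_inc[OF fin] False by metis
    have k: "kap Q a d = kap Q \<alpha> \<beta>"
    proof -
      have "kap Q a d = kap Q (partner \<alpha>) (partner \<beta>)" by (simp add: \<alpha>_def \<beta>_def)
      also have "\<dots> = inverse (kap Q \<alpha> (partner \<beta>))" using ga by (simp add: kap_pl)
      also have "\<dots> = kap Q \<alpha> \<beta>" using ga by (simp add: kap_pr)
      finally show ?thesis .
    qed
    have knz: "kap Q \<alpha> \<beta> \<noteq> 0" using kap_nz ga by blast
    have kinv: "inverse (kap Q \<beta> \<alpha>) = kap Q \<alpha> \<beta>" using kap_inverse ga by blast
    show ?thesis
    proof (cases "\<alpha> < \<beta>")
      case True
      then have "\<not> \<beta> < \<alpha>" by simp
      then show ?thesis using True L R t1 t2 e1 e2 k dl kinv by (simp add: ac_simps)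
    next
      case lt: False
      then have "\<beta> < \<alpha>" using False by simp
      then have "kap Q a d * F d (F a f) n = (kap Q \<alpha> \<beta> * inverse (kap Q \<alpha> \<beta>)) *
          (nu Q \<beta> (Suc (n \<beta>)) * inverse (th Q \<beta> n) * (nu Q \<alpha> (Suc (n \<alpha>)) * inverse (th Q \<alpha> n) * f (inc \<beta> (inc \<alpha> n))))"
        using R t2 e1 e2 k lt by (simp add: ac_simps)
      also have "\<dots> = F a (F d f) n" using knz L t1 e1 lt by (simp add: ac_simps)
      finally show ?thesis using dl by simp
    qed
  qed
qed

end


context fock begin

lemma comm_ac:
  assumes a: "a \<in> gens l" "\<not> crt a" and d: "d \<in> gens l" "crt d" and n: "gd n" and f: "f \<in> FC Q l"
  shows "F a (F d f) n = kap Q a d * F d (F a f) n + dlt Q a d * f n"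
proof -
  define \<alpha> where "\<alpha> = partner a"
  have ga: "\<alpha> \<in> gens l" using a by (simp add: \<alpha>_def)
  have aa: "a = partner \<alpha>" by (simp add: \<alpha>_def)
  have fin: "finite {g. n g \<noteq> 0}" using good_fin[OF n] .
  have L: "F a (F d f) n = nu Q \<alpha> (Suc (n \<alpha>)) * inverse (th Q \<alpha> n) * F d f (inc \<alpha> n)"
    using a F_FC by (simp add: F_ann \<alpha>_def)
  have R: "F d (F a f) n = (if 0 < n d then th Q d (dec d n) *
       (nu Q \<alpha> (Suc (dec d n \<alpha>)) * inverse (th Q \<alpha> (dec d n)) * f (inc \<alpha> (dec d n))) else 0)"
    using a d n f by (simp add: F_cre F_ann \<alpha>_def)
  show ?thesis
  proof (cases "d = \<alpha>")
    case False
    have dl: "dlt Q a d = 0" using False by (intro dlt_other) (simp add: \<alpha>_def)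
    have Fd: "F d f (inc \<alpha> n) = (if 0 < n d then th Q d (dec d (inc \<alpha> n)) * f (dec d (inc \<alpha> n)) else 0)"
    proof (cases "gd (inc \<alpha> n)")
      case True
      then show ?thesis using d False by (simp add: F_cre)
    next
      case gF: False
      have "\<not> gd (inc \<alpha> (dec d n))"
        using gF good_inc[OF ga] n good_dec[OF n, of d] False by auto
      then have "f (dec d (inc \<alpha> n)) = 0" using f FC_bad False by (simp add: inc_dec_comm)
      then show ?thesis using gF by (simp add: F_bad)
    qed
    show ?thesis
    proof (cases "n d = 0")
      case True
      then show ?thesis using L R Fd dl by simp
    next
      case nd: False
      define m where "m = dec d n"
      have nm: "n = inc d m" unfolding m_def using nd by (simp add: inc_dec)
      have finm: "finite {g. m g \<noteq> 0}" unfolding m_def using fin fin_dec by blast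
      have e1: "dec d (inc \<alpha> n) = inc \<alpha> m" unfolding m_def using False by (simp add: inc_dec_comm)
      have e2: "m \<alpha> = n \<alpha>" unfolding m_def using False by simp
      have t1: "th Q \<alpha> n = th Q \<alpha> m * (if d < \<alpha> then kap Q \<alpha> d else 1)"
        unfolding nm using th_inc[OF finm] False by metis
      have t2: "th Q d (inc \<alpha> m) = th Q d m * (if \<alpha> < d then kap Q d \<alpha> else 1)"
        using th_inc[OF finm] False by metis
      have k: "kap Q a d = inverse (kap Q \<alpha> d)" unfolding aa using ga d by (simp add: kap_pl)
      have kinv: "inverse (kap Q \<alpha> d) = kap Q d \<alpha>" using kap_inverse ga d by blast
      have LL: "F a (F d f) n = nu Q \<alpha> (Suc (n \<alpha>)) * inverse (th Q \<alpha> n) * (th Q d (inc \<alpha> m) * f (inc \<alpha> m))"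
        using L Fd nd e1 by simp
      have RR: "F d (F a f) n = th Q d m * (nu Q \<alpha> (Suc (n \<alpha>)) * inverse (th Q \<alpha> m) * f (inc \<alpha> m))"
        using R nd e2 by (simp add: m_def)
      show ?thesis
      proof (cases "\<alpha> < d")
        case True
        then have "\<not> d < \<alpha>" by simp
        then show ?thesis using True LL RR t1 t2 k kinv dl by (simp add: ac_simps)
      next
        case lt: False
        then have "d < \<alpha>" using False by simp
        then show ?thesis using lt LL RR t1 t2 k dl by (simp add: ac_simps)
      qed
    qed
  next
    case True
    have k: "kap Q a d = Q (fst \<alpha>) (fst \<alpha>)" using True aa kap_pself(1) by simp
    have dl: "dlt Q a d = eps Q \<alpha>" using True by (simp add: \<alpha>_def dlt_partner)
    have tnz: "th Q \<alpha> n \<noteq> 0" using th_nz[OF n ga] .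
    have Fd: "F d f (inc \<alpha> n) = (if gd (inc \<alpha> n) then th Q \<alpha> n * f n else 0)"
      using True d fin by (simp add: F_cre F_bad th_inc_self[symmetric])
    have LL: "F a (F d f) n = (if gd (inc \<alpha> n) then nu Q \<alpha> (Suc (n \<alpha>)) else 0) * f n"
      using L Fd tnz by simp
    have RR: "F d (F a f) n = (if 0 < n \<alpha> then nu Q \<alpha> (n \<alpha>) else 0) * f n"
    proof (cases "0 < n \<alpha>")
      case True
      have "th Q \<alpha> (dec \<alpha> n) \<noteq> 0" using th_nz[OF good_dec[OF n] ga] .
      then show ?thesis using R True \<open>d = \<alpha>\<close> by (simp add: inc_dec)
    qed (use R \<open>d = \<alpha>\<close> in simp)
    have fa: "fst \<alpha> \<in> {1..l}" using gens_fst ga by blast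
    have gi: "gd (inc \<alpha> n) \<longleftrightarrow> (Q (fst \<alpha>) (fst \<alpha>) \<noteq> 1 \<longrightarrow> n \<alpha> = 0)" using good_inc[OF ga] n by simp
    have key: "(if gd (inc \<alpha> n) then nu Q \<alpha> (Suc (n \<alpha>)) else 0)
        = Q (fst \<alpha>) (fst \<alpha>) * (if 0 < n \<alpha> then nu Q \<alpha> (n \<alpha>) else 0) + eps Q \<alpha>"
    proof (cases "Q (fst \<alpha>) (fst \<alpha>) = 1")
      case True
      then show ?thesis using gi by (simp add: nu_Suc)
    next
      case False
      then have Qm: "Q (fst \<alpha>) (fst \<alpha>) = -1" using Qii[OF fa] by simp
      have le: "n \<alpha> \<le> 1" using n False unfolding good_def by blast
      show ?thesis
      proof (cases "n \<alpha> = 0")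
        case True then show ?thesis using gi by (simp add: nu_Suc)
      next
        case False
        then have "n \<alpha> = 1" using le by simp
        then show ?thesis using gi Qm by (simp add: nu_Suc)
      qed
    qed
    show ?thesis using LL RR key k dl by (simp add: algebra_simps)
  qed
qed

end


context fock begin

lemma comm_ca:
  assumes a: "a \<in> gens l" "crt a" and d: "d \<in> gens l" "\<not> crt d" and n: "gd n" and f: "f \<in> FC Q l"
  shows "F a (F d f) n = kap Q a d * F d (F a f) n + dlt Q a d * f n"
proof -
  define \<beta> where "\<beta> = partner d"
  have gb: "\<beta> \<in> gens l" using d by (simp add: \<beta>_def)
  have dd: "d = partner \<beta>" by (simp add: \<beta>_def)
  have fin: "finite {g. n g \<noteq> 0}" using good_fin[OF n] .
  have L: "F a (F d f) n = (if 0 < n a then th Q a (dec a n) *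
      (nu Q \<beta> (Suc (dec a n \<beta>)) * inverse (th Q \<beta> (dec a n)) * f (inc \<beta> (dec a n))) else 0)"
    using a d n f by (simp add: F_cre F_ann \<beta>_def)
  have R: "F d (F a f) n = nu Q \<beta> (Suc (n \<beta>)) * inverse (th Q \<beta> n) * F a f (inc \<beta> n)"
    using d F_FC by (simp add: F_ann \<beta>_def)
  show ?thesis
  proof (cases "a = \<beta>")
    case False
    have dl: "dlt Q a d = 0" using False by (intro dlt_other) (auto simp: \<beta>_def)
    have Fa: "F a f (inc \<beta> n) = (if 0 < n a then th Q a (dec a (inc \<beta> n)) * f (dec a (inc \<beta> n)) else 0)"
    proof (cases "gd (inc \<beta> n)")
      case True
      then show ?thesis using a False by (simp add: F_cre)
    next
      case gF: False
      have "\<not> gd (inc \<beta> (dec a n))"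
        using gF good_inc[OF gb] n good_dec[OF n, of a] False by auto
      then have "f (dec a (inc \<beta> n)) = 0" using f FC_bad False by (simp add: inc_dec_comm)
      then show ?thesis using gF by (simp add: F_bad)
    qed
    show ?thesis
    proof (cases "n a = 0")
      case True
      then show ?thesis using L R Fa dl by simp
    next
      case na: False
      define m where "m = dec a n"
      have nm: "n = inc a m" unfolding m_def using na by (simp add: inc_dec)
      have finm: "finite {g. m g \<noteq> 0}" unfolding m_def using fin fin_dec by blast
      have e1: "dec a (inc \<beta> n) = inc \<beta> m" unfolding m_def using False by (simp add: inc_dec_comm)
      have e2: "m \<beta> = n \<beta>" unfolding m_def using False by simp
      have t1: "th Q \<beta> n = th Q \<beta> m * (if a < \<beta> then kap Q \<beta> a else 1)"
        unfolding nm using th_inc[OF finm] False by metis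
      have t2: "th Q a (inc \<beta> m) = th Q a m * (if \<beta> < a then kap Q a \<beta> else 1)"
        using th_inc[OF finm] False by metis
      have k: "kap Q a d = inverse (kap Q a \<beta>)" unfolding dd using gb a by (simp add: kap_pr)
      have knz: "kap Q a \<beta> \<noteq> 0" using kap_nz gb a by blast
      have ki: "kap Q a \<beta> * kap Q \<beta> a = 1" using kap_inv gb a by blast
      have LL: "F a (F d f) n = th Q a m * (nu Q \<beta> (Suc (n \<beta>)) * inverse (th Q \<beta> m) * f (inc \<beta> m))"
        using L na e2 by (simp add: m_def)
      have RR: "F d (F a f) n = nu Q \<beta> (Suc (n \<beta>)) * inverse (th Q \<beta> n) * (th Q a (inc \<beta> m) * f (inc \<beta> m))"
        using R Fa na e1 by simp
      show ?thesis
      proof (cases "\<beta> < a")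
        case True
        then have "\<not> a < \<beta>" by simp
        then show ?thesis using True LL RR t1 t2 k knz dl by (simp add: ac_simps)
      next
        case lt: False
        then have ab: "a < \<beta>" using False by simp
        have "inverse (kap Q a \<beta>) * inverse (kap Q \<beta> a) = 1"
          using ki by (metis inverse_mult_distrib inverse_1)
        then have "kap Q a d * F d (F a f) n = (inverse (kap Q a \<beta>) * inverse (kap Q \<beta> a)) *
            (th Q a m * (nu Q \<beta> (Suc (n \<beta>)) * inverse (th Q \<beta> m) * f (inc \<beta> m)))"
          using RR t1 t2 k ab lt by (simp add: ac_simps)
        also have "\<dots> = F a (F d f) n" using LL \<open>inverse (kap Q a \<beta>) * inverse (kap Q \<beta> a) = 1\<close> by simp
        finally show ?thesis using dl by simp
      qed
    qed
  next
    case True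
    have ad: "d = partner a" using True dd by simp
    have k: "kap Q a d = Q (fst a) (fst a)" using ad kap_pself(2) by simp
    have dl: "dlt Q a d = - Q (fst a) (fst a) * eps Q a" using ad a eps_partner by (simp add: dlt_partner)
    have tnz: "th Q a n \<noteq> 0" using th_nz[OF n a(1)] .
    have Fa: "F a f (inc a n) = (if gd (inc a n) then th Q a n * f n else 0)"
      using a fin by (simp add: F_cre F_bad th_inc_self[symmetric])
    have RR: "F d (F a f) n = (if gd (inc a n) then nu Q a (Suc (n a)) else 0) * f n"
      using R Fa tnz True by simp
    have LL: "F a (F d f) n = (if 0 < n a then nu Q a (n a) else 0) * f n"
    proof (cases "0 < n a")
      case True
      have "th Q a (dec a n) \<noteq> 0" using th_nz[OF good_dec[OF n] a(1)] .
      then show ?thesis using L True \<open>a = \<beta>\<close> by (simp add: inc_dec)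
    qed (use L in simp)
    have fa: "fst a \<in> {1..l}" using gens_fst a by blast
    have gi: "gd (inc a n) \<longleftrightarrow> (Q (fst a) (fst a) \<noteq> 1 \<longrightarrow> n a = 0)" using good_inc[OF a(1)] n by simp
    have key: "(if 0 < n a then nu Q a (n a) else 0)
        = Q (fst a) (fst a) * (if gd (inc a n) then nu Q a (Suc (n a)) else 0) + - Q (fst a) (fst a) * eps Q a"
    proof (cases "Q (fst a) (fst a) = 1")
      case True
      then show ?thesis using gi by (simp add: nu_Suc)
    next
      case False
      then have Qm: "Q (fst a) (fst a) = -1" using Qii[OF fa] by simp
      have le: "n a \<le> 1" using n False unfolding good_def by blast
      show ?thesis
      proof (cases "n a = 0")
        case True then show ?thesis using gi Qm by (simp add: nu_Suc)
      next
        case False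
        then have "n a = 1" using le by simp
        then show ?thesis using gi Qm by (simp add: nu_Suc)
      qed
    qed
    show ?thesis using LL RR key k dl by (simp add: algebra_simps)
  qed
qed

lemma Fcomm:
  assumes a: "a \<in> gens l" and d: "d \<in> gens l" and f: "f \<in> FC Q l"
  shows "F a (F d f) n = kap Q a d * F d (F a f) n + dlt Q a d * f n"
proof (cases "gd n")
  case False
  then show ?thesis using f by (simp add: F_bad FC_bad)
next
  case True
  show ?thesis
  proof (cases "crt a")
    case ca: True
    show ?thesis
    proof (cases "crt d")
      case True show ?thesis by (rule comm_cc[OF a ca d True \<open>gd n\<close> f])
    next
      case False show ?thesis by (rule comm_ca[OF a ca d False \<open>gd n\<close> f])
    qed
  next
    case ca: False
    show ?thesis
    proof (cases "crt d")
      case True show ?thesis by (rule comm_ac[OF a ca d True \<open>gd n\<close> f])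
    next
      case False show ?thesis by (rule comm_aa[OF a ca d False \<open>gd n\<close> f])
    qed
  qed
qed

end


definition FM :: "(nat \<Rightarrow> nat \<Rightarrow> complex) \<Rightarrow> nat \<Rightarrow> (complex, st \<Rightarrow> complex) module" where
  "FM Q l = \<lparr>carrier = FC Q l, mult = (\<lambda>f g. f), one = (\<lambda>_. 0), zero = (\<lambda>_. 0),
     add = (\<lambda>f g n. f n + g n), smult = (\<lambda>c f n. c * f n)\<rparr>"

definition FX :: "(nat \<Rightarrow> nat \<Rightarrow> complex) \<Rightarrow> nat \<Rightarrow> nat \<Rightarrow> int \<Rightarrow> (st \<Rightarrow> complex) \<Rightarrow> (st \<Rightarrow> complex)" where
  "FX Q l i m = Fop Q l (i, m, True)"
definition FY :: "(nat \<Rightarrow> nat \<Rightarrow> complex) \<Rightarrow> nat \<Rightarrow> nat \<Rightarrow> int \<Rightarrow> (st \<Rightarrow> complex) \<Rightarrow> (st \<Rightarrow> complex)" where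
  "FY Q l i m = Fop Q l (i, m, False)"
definition Fvac :: "st \<Rightarrow> complex" where "Fvac = (\<lambda>n. if n = (\<lambda>_. 0) then 1 else 0)"

lemma FM_simps[simp]: "carrier (FM Q l) = FC Q l" "zero (FM Q l) = (\<lambda>_. 0)"
  "add (FM Q l) = (\<lambda>f g n. f n + g n)" "smult (FM Q l) = (\<lambda>c f n. c * f n)"
  by (simp_all add: FM_def)

lemma FC_add: "f \<in> FC Q l \<Longrightarrow> g \<in> FC Q l \<Longrightarrow> (\<lambda>n. f n + g n) \<in> FC Q l" by (simp add: FC_def)
lemma FC_smult: "f \<in> FC Q l \<Longrightarrow> (\<lambda>n. c * f n) \<in> FC Q l" by (simp add: FC_def)
lemma FC_zero: "(\<lambda>_. 0) \<in> FC Q l" by (simp add: FC_def)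

lemma module_FM: "module CC (FM Q l)"
proof (rule moduleI[OF cring_CC])
  show "abelian_group (FM Q l)"
  proof (rule abelian_groupI)
    fix x assume x: "x \<in> carrier (FM Q l)"
    show "\<exists>y\<in>carrier (FM Q l). y \<oplus>\<^bsub>FM Q l\<^esub> x = \<zero>\<^bsub>FM Q l\<^esub>"
      using x by (intro bexI[of _ "\<lambda>n. - x n"]) (auto simp: FC_def)
  qed (auto simp: FC_add FC_zero algebra_simps)
qed (auto simp: FC_add FC_smult algebra_simps)

context fock begin

lemma Fop_add: "Fop Q l a (\<lambda>n. f n + g n) = (\<lambda>n. Fop Q l a f n + Fop Q l a g n)"
  by (auto simp: Fop_def algebra_simps)
lemma Fop_smult: "Fop Q l a (\<lambda>n. c * f n) = (\<lambda>n. c * Fop Q l a f n)"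
  by (auto simp: Fop_def algebra_simps)

lemma AQ_FM: "AQ_module Q l (FM Q l) (FX Q l) (FY Q l)"
  unfolding AQ_module_def
proof (intro conjI ballI allI)
  show "module CC (FM Q l)" by (rule module_FM)
  fix i n
  show "lin_op (FM Q l) (FX Q l i n)" "lin_op (FM Q l) (FY Q l i n)"
    by (auto simp: lin_op_def FX_def FY_def F_FC Fop_add Fop_smult)
next
  fix i j m n v assume i: "i \<in> {1..l}" and j: "j \<in> {1..l}" and v: "v \<in> carrier (FM Q l)"
  have gi: "(i, m, b) \<in> gens l" and gj: "(j, n, b) \<in> gens l" for b using i j by auto
  have vf: "v \<in> FC Q l" using v by simp
  note C = Fcomm[OF gi gj vf]
  show "FX Q l i m (FX Q l j n v) = Q i j \<odot>\<^bsub>FM Q l\<^esub> FX Q l j n (FX Q l i m v)"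
    using C[of True] by (auto simp: FX_def kap_def dlt_def partner_def)
  show "FY Q l i m (FY Q l j n v) = Q i j \<odot>\<^bsub>FM Q l\<^esub> FY Q l j n (FY Q l i m v)"
    using C[of False] by (auto simp: FY_def kap_def dlt_def partner_def)
  have e: "((j, n, False) = partner (i, m, True)) \<longleftrightarrow> (i = j \<and> m + n + 1 = 0)"
    by (auto simp: partner_def)
  show "FX Q l i m (FY Q l j n v) = Q j i \<odot>\<^bsub>FM Q l\<^esub> FY Q l j n (FX Q l i m v) \<oplus>\<^bsub>FM Q l\<^esub>
      (if i = j \<and> m + n + 1 = 0 then v else \<zero>\<^bsub>FM Q l\<^esub>)"
  proof
    fix s
    have "FX Q l i m (FY Q l j n v) s = kap Q (i, m, True) (j, n, False) * FY Q l j n (FX Q l i m v) s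
        + dlt Q (i, m, True) (j, n, False) * v s"
      using Fcomm[OF gi[of True] gj[of False] vf] by (simp add: FX_def FY_def)
    moreover have "dlt Q (i, m, True) (j, n, False) = (if i = j \<and> m + n + 1 = 0 then 1 else 0)"
      using e by (simp add: dlt_def)
    ultimately show "FX Q l i m (FY Q l j n v) s = (Q j i \<odot>\<^bsub>FM Q l\<^esub> FY Q l j n (FX Q l i m v) \<oplus>\<^bsub>FM Q l\<^esub>
      (if i = j \<and> m + n + 1 = 0 then v else \<zero>\<^bsub>FM Q l\<^esub>)) s"
      by (simp add: kap_def)
  qed
qed

lemma good_zero: "gd (\<lambda>_. 0)" by (simp add: good_def)

lemma Fvac_FC: "Fvac \<in> FC Q l"
  by (auto simp: FC_def Fvac_def good_zero)

lemma vac_FM: "is_vacuum l (FM Q l) (FX Q l) (FY Q l) Fvac"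
  unfolding is_vacuum_def
proof (intro conjI ballI allI impI)
  show "Fvac \<in> carrier (FM Q l)" using Fvac_FC by simp
  fix i :: nat and m :: int assume i: "i \<in> {1..l}" and m: "0 \<le> m"
  have z: "Fvac (inc a n) = 0" for a n
  proof -
    have "inc a n a \<noteq> 0" by simp
    then have "inc a n \<noteq> (\<lambda>_. 0)" by force
    then show ?thesis by (simp add: Fvac_def)
  qed
  have nc: "\<not> crt (i, m, b)" for b using m by (simp add: crt_def)
  show "FX Q l i m Fvac = \<zero>\<^bsub>FM Q l\<^esub>"
    using F_ann[OF Fvac_FC nc] z by (auto simp: FX_def)
  show "FY Q l i m Fvac = \<zero>\<^bsub>FM Q l\<^esub>"
    using F_ann[OF Fvac_FC nc] z by (auto simp: FY_def)
qed

lemma Fvac_nz: "Fvac \<noteq> \<zero>\<^bsub>FM Q l\<^esub>"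
proof
  assume "Fvac = \<zero>\<^bsub>FM Q l\<^esub>"
  then have "Fvac (\<lambda>_. 0) = (0::complex)" by (metis FM_simps(2))
  then show False by (simp add: Fvac_def)
qed

lemma one_notin_NQ: "fa_word [] \<notin> NQ Q l"
proof
  assume h: "fa_word [] \<in> NQ Q l"
  interpret A: aqm Q l "FM Q l" "FX Q l" "FY Q l"
    by unfold_locales (rule AQ_FM, rule Qinv)
  have "act (FM Q l) (FX Q l) (FY Q l) (fa_word []) Fvac = \<zero>\<^bsub>FM Q l\<^esub>"
    using A.NQ_act[OF h vac_FM] by blast
  moreover have "act (FM Q l) (FX Q l) (FY Q l) (fa_word []) Fvac = Fvac"
    using A.act_word[of "[]" Fvac] Fvac_FC by simp
  ultimately show False using Fvac_nz by simp
qed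

end


context vqm begin

abbreviation phi :: "fa set \<Rightarrow> 'm" where "phi A \<equiv> act M X Y (vq_rep A) w"

lemma phi_cls: "f \<in> FA l \<Longrightarrow> phi (vq_class Q l f) = act M X Y f w"
proof -
  assume f: "f \<in> FA l"
  have r: "vq_rep (vq_class Q l f) \<in> FA l" "fa_add (vq_rep (vq_class Q l f)) (fa_smult (-1) f) \<in> NQ Q l"
    using rep_cls[OF f] by auto
  let ?x = "act M X Y (vq_rep (vq_class Q l f)) w" and ?y = "act M X Y f w"
  have xy: "?x \<in> carrier M" "?y \<in> carrier M" using r f by auto
  have v: "is_vacuum l M X Y w" using vm by (simp add: vacuum_module_def)
  have "act M X Y (fa_add (vq_rep (vq_class Q l f)) (fa_smult (-1) f)) w = \<zero>\<^bsub>M\<^esub>"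
    using NQ_act[OF r(2) v] by blast
  moreover have "act M X Y (fa_add (vq_rep (vq_class Q l f)) (fa_smult (-1) f)) w = ?x \<oplus>\<^bsub>M\<^esub> (-1) \<odot>\<^bsub>M\<^esub> ?y"
    using act_add[OF r(1) fa_smult_FA[OF f]] act_smult[OF f] by simp
  ultimately have "?x \<oplus>\<^bsub>M\<^esub> \<ominus>\<^bsub>M\<^esub> ?y = \<zero>\<^bsub>M\<^esub>" using sm_neg xy by simp
  then have "?x \<oplus>\<^bsub>M\<^esub> \<ominus>\<^bsub>M\<^esub> ?y \<oplus>\<^bsub>M\<^esub> ?y = ?y" using xy by simp
  moreover have "?x \<oplus>\<^bsub>M\<^esub> \<ominus>\<^bsub>M\<^esub> ?y \<oplus>\<^bsub>M\<^esub> ?y = ?x" using xy by (simp add: M.a_assoc M.l_neg)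
  ultimately show ?thesis by simp
qed

lemma w_nz: "carrier M \<noteq> {\<zero>\<^bsub>M\<^esub>} \<Longrightarrow> w \<noteq> \<zero>\<^bsub>M\<^esub>"
proof
  assume nz: "carrier M \<noteq> {\<zero>\<^bsub>M\<^esub>}" and w0: "w = \<zero>\<^bsub>M\<^esub>"
  have "AQ_submodule l {\<zero>\<^bsub>M\<^esub>} M X Y"
    unfolding AQ_submodule_def
  proof (intro conjI ballI allI)
    show "submodule {\<zero>\<^bsub>M\<^esub>} CC M" by (rule submoduleI) auto
    fix i n v assume "i \<in> {1..l}" "v \<in> {\<zero>\<^bsub>M\<^esub>}"
    then show "X i n v \<in> {\<zero>\<^bsub>M\<^esub>}" "Y i n v \<in> {\<zero>\<^bsub>M\<^esub>}"
      using op_zero[of "(i, n, True)"] op_zero[of "(i, n, False)"] by (auto simp: op_def)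
  qed
  then have "carrier M \<subseteq> {\<zero>\<^bsub>M\<^esub>}" using vm w0 by (auto simp: vacuum_module_def generates_def)
  then show False using nz by auto
qed


lemma phi_closed: "A \<in> carrier (VQ Q l) \<Longrightarrow> phi A \<in> carrier M"
  by (auto simp: VQ_carrier phi_cls)

lemma phi_add: "A \<in> carrier (VQ Q l) \<Longrightarrow> B \<in> carrier (VQ Q l) \<Longrightarrow> phi (A \<oplus>\<^bsub>VQ Q l\<^esub> B) = phi A \<oplus>\<^bsub>M\<^esub> phi B"
  by (auto simp: VQ_carrier VQ_add_cls phi_cls fa_add_FA act_add)

lemma phi_smult: "A \<in> carrier (VQ Q l) \<Longrightarrow> phi (c \<odot>\<^bsub>VQ Q l\<^esub> A) = c \<odot>\<^bsub>M\<^esub> phi A"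
  by (auto simp: VQ_carrier VQ_smult_cls phi_cls fa_smult_FA act_smult)

lemma phi_X: "i \<in> {1..l} \<Longrightarrow> A \<in> carrier (VQ Q l) \<Longrightarrow> phi (VQ_X Q l i n A) = X i n (phi A)"
proof -
  assume i: "i \<in> {1..l}" and A: "A \<in> carrier (VQ Q l)"
  then obtain f where f: "f \<in> FA l" "A = vq_class Q l f" by (auto simp: VQ_carrier)
  have s: "set [(i, n, True)] \<subseteq> gens l" using i by simp
  have "phi (VQ_X Q l i n A) = act M X Y (fa_mult (fa_word [(i, n, True)]) f) w"
    using f i by (simp add: VQ_X_cls phi_cls fa_mult_FA w1FA)
  also have "\<dots> = X i n (act M X Y f w)" using act_word_mult[OF f(1) s] by (simp add: op_def)
  finally show ?thesis using f by (simp add: phi_cls)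
qed

lemma phi_Y: "i \<in> {1..l} \<Longrightarrow> A \<in> carrier (VQ Q l) \<Longrightarrow> phi (VQ_Y Q l i n A) = Y i n (phi A)"
proof -
  assume i: "i \<in> {1..l}" and A: "A \<in> carrier (VQ Q l)"
  then obtain f where f: "f \<in> FA l" "A = vq_class Q l f" by (auto simp: VQ_carrier)
  have s: "set [(i, n, False)] \<subseteq> gens l" using i by simp
  have "phi (VQ_Y Q l i n A) = act M X Y (fa_mult (fa_word [(i, n, False)]) f) w"
    using f i by (simp add: VQ_Y_cls phi_cls fa_mult_FA w1FA)
  also have "\<dots> = Y i n (act M X Y f w)" using act_word_mult[OF f(1) s] by (simp add: op_def)
  finally show ?thesis using f by (simp add: phi_cls)
qed

lemma phi_zero: "phi \<zero>\<^bsub>VQ Q l\<^esub> = \<zero>\<^bsub>M\<^esub>"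
  by (simp add: VQ_zero phi_cls)

lemma phi_vac: "phi (VQ_vac Q l) = w"
  by (simp add: VQ_vac_def phi_cls fa_word_FA act_word)

lemma VQ_neg: "A \<in> carrier (VQ Q l) \<Longrightarrow> \<ominus>\<^bsub>VQ Q l\<^esub> A = (-1) \<odot>\<^bsub>VQ Q l\<^esub> A"
proof -
  interpret V: module CC "VQ Q l" by (rule module_VQ)
  assume A: "A \<in> carrier (VQ Q l)"
  have "1 \<odot>\<^bsub>VQ Q l\<^esub> A = A" using V.smult_one[OF A] by simp
  then show ?thesis using V.smult_l_minus[of 1 A] A by simp
qed

lemma VQ_X_closed: "i \<in> {1..l} \<Longrightarrow> A \<in> carrier (VQ Q l) \<Longrightarrow> VQ_X Q l i n A \<in> carrier (VQ Q l)"
  by (auto simp: VQ_carrier VQ_X_cls fa_mult_FA w1FA)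
lemma VQ_Y_closed: "i \<in> {1..l} \<Longrightarrow> A \<in> carrier (VQ Q l) \<Longrightarrow> VQ_Y Q l i n A \<in> carrier (VQ Q l)"
  by (auto simp: VQ_carrier VQ_Y_cls fa_mult_FA w1FA)

theorem iso:
  assumes nz: "carrier M \<noteq> {\<zero>\<^bsub>M\<^esub>}" and irr: "AQ_irreducible Q l (VQ Q l) (VQ_X Q l) (VQ_Y Q l)"
  shows "AQ_iso l phi (VQ Q l) (VQ_X Q l) (VQ_Y Q l) M X Y"
proof -
  interpret V: module CC "VQ Q l" by (rule module_VQ)
  have wnz: "w \<noteq> \<zero>\<^bsub>M\<^esub>" by (rule w_nz[OF nz])
  have inj: "inj_on phi (carrier (VQ Q l))"
  proof (rule inj_onI)
    fix A B assume A: "A \<in> carrier (VQ Q l)" and B: "B \<in> carrier (VQ Q l)" and e: "phi A = phi B"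
    define K where "K = {C \<in> carrier (VQ Q l). phi C = \<zero>\<^bsub>M\<^esub>}"
    have Ksub: "AQ_submodule l K (VQ Q l) (VQ_X Q l) (VQ_Y Q l)"
      unfolding AQ_submodule_def
    proof (intro conjI ballI allI)
      show "submodule K CC (VQ Q l)"
      proof (rule V.submoduleI)
        show "K \<subseteq> carrier (VQ Q l)" by (auto simp: K_def)
        show "\<zero>\<^bsub>VQ Q l\<^esub> \<in> K" by (simp add: K_def phi_zero)
        fix a b assume "a \<in> K" "b \<in> K"
        then show "a \<oplus>\<^bsub>VQ Q l\<^esub> b \<in> K" by (simp add: K_def phi_add)
      next
        fix c x assume "x \<in> K"
        then show "c \<odot>\<^bsub>VQ Q l\<^esub> x \<in> K" by (simp add: K_def phi_smult)
      next
        fix x assume "x \<in> K"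
        then show "\<ominus>\<^bsub>VQ Q l\<^esub> x \<in> K" by (simp add: K_def phi_smult VQ_neg)
      qed
      fix i n v assume i: "i \<in> {1..l}" and v: "v \<in> K"
      show "VQ_X Q l i n v \<in> K" using i v op_zero[of "(i, n, True)"]
        by (simp add: K_def phi_X VQ_X_closed op_def)
      show "VQ_Y Q l i n v \<in> K" using i v op_zero[of "(i, n, False)"]
        by (simp add: K_def phi_Y VQ_Y_closed op_def)
    qed
    have vacin: "VQ_vac Q l \<in> carrier (VQ Q l)" by (simp add: VQ_vac_def cls_in fa_word_FA)
    have "VQ_vac Q l \<notin> K" using wnz by (simp add: K_def phi_vac)
    then have K0: "K = {\<zero>\<^bsub>VQ Q l\<^esub>}" using irr Ksub vacin unfolding AQ_irreducible_def by blast
    have pc: "phi A \<in> carrier M" "phi B \<in> carrier M" using A B phi_closed by auto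
    have "phi (A \<oplus>\<^bsub>VQ Q l\<^esub> \<ominus>\<^bsub>VQ Q l\<^esub> B) = phi A \<oplus>\<^bsub>M\<^esub> (-1) \<odot>\<^bsub>M\<^esub> phi B"
      using A B by (simp add: phi_add phi_smult VQ_neg)
    also have "\<dots> = \<zero>\<^bsub>M\<^esub>" using e pc sm_neg[of "phi B"] M.r_neg[of "phi B"] by simp
    finally have "A \<oplus>\<^bsub>VQ Q l\<^esub> \<ominus>\<^bsub>VQ Q l\<^esub> B \<in> K" using A B by (simp add: K_def)
    then have z: "A \<oplus>\<^bsub>VQ Q l\<^esub> \<ominus>\<^bsub>VQ Q l\<^esub> B = \<zero>\<^bsub>VQ Q l\<^esub>" using K0 by simp
    have "A = A \<oplus>\<^bsub>VQ Q l\<^esub> \<ominus>\<^bsub>VQ Q l\<^esub> B \<oplus>\<^bsub>VQ Q l\<^esub> B" using A B by (simp add: V.a_assoc V.l_neg)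
    then show "A = B" using z B by simp
  qed
  have img: "phi ` carrier (VQ Q l) = carrier M"
  proof
    show "phi ` carrier (VQ Q l) \<subseteq> carrier M" using phi_closed by auto
    define I where "I = phi ` carrier (VQ Q l)"
    have Isub: "AQ_submodule l I M X Y"
      unfolding AQ_submodule_def
    proof (intro conjI ballI allI)
      show "submodule I CC M"
      proof (rule submoduleI)
        show "I \<subseteq> carrier M" using phi_closed by (auto simp: I_def)
        show "\<zero>\<^bsub>M\<^esub> \<in> I" unfolding I_def
          by (rule image_eqI[where x="\<zero>\<^bsub>VQ Q l\<^esub>"]) (simp_all add: phi_zero)
        fix a b assume "a \<in> I" "b \<in> I"
        then obtain A B where AB: "A \<in> carrier (VQ Q l)" "B \<in> carrier (VQ Q l)" "a = phi A" "b = phi B"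
          unfolding I_def by blast
        show "a \<oplus>\<^bsub>M\<^esub> b \<in> I" unfolding I_def
          by (rule image_eqI[where x="A \<oplus>\<^bsub>VQ Q l\<^esub> B"]) (simp_all add: AB phi_add)
      next
        fix c x assume "x \<in> I"
        then obtain A where A: "A \<in> carrier (VQ Q l)" "x = phi A" unfolding I_def by blast
        show "c \<odot>\<^bsub>M\<^esub> x \<in> I" unfolding I_def
          by (rule image_eqI[where x="c \<odot>\<^bsub>VQ Q l\<^esub> A"]) (simp_all add: A phi_smult)
      next
        fix x assume "x \<in> I"
        then obtain A where A: "A \<in> carrier (VQ Q l)" "x = phi A" unfolding I_def by blast
        have "\<ominus>\<^bsub>M\<^esub> x = (-1) \<odot>\<^bsub>M\<^esub> x" using sm_neg phi_closed A by simp
        then show "\<ominus>\<^bsub>M\<^esub> x \<in> I" unfolding I_def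
          by (intro image_eqI[where x="(-1) \<odot>\<^bsub>VQ Q l\<^esub> A"]) (simp_all add: A phi_smult)
      qed
      fix i n v assume i: "i \<in> {1..l}" and v: "v \<in> I"
      then obtain A where A: "A \<in> carrier (VQ Q l)" "v = phi A" unfolding I_def by blast
      show "X i n v \<in> I" unfolding I_def
        by (rule image_eqI[where x="VQ_X Q l i n A"]) (simp_all add: A phi_X[OF i A(1)] VQ_X_closed[OF i A(1)])
      show "Y i n v \<in> I" unfolding I_def
        by (rule image_eqI[where x="VQ_Y Q l i n A"]) (simp_all add: A phi_Y[OF i A(1)] VQ_Y_closed[OF i A(1)])
    qed
    have "w \<in> I" unfolding I_def
      by (rule image_eqI[where x="VQ_vac Q l"]) (simp add: phi_vac, simp add: VQ_vac_def cls_in fa_word_FA)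
    then show "carrier M \<subseteq> phi ` carrier (VQ Q l)" using vm Isub unfolding I_def
      by (auto simp: vacuum_module_def generates_def)
  qed
  show ?thesis unfolding AQ_iso_def
    using inj img phi_add phi_smult phi_X phi_Y by (auto simp: bij_betw_def)
qed

end

lemma VQ_vac_nz: "fa_word [] \<notin> NQ Q l \<Longrightarrow> VQ_vac Q l \<noteq> \<zero>\<^bsub>VQ Q l\<^esub>"
proof
  assume n: "fa_word [] \<notin> NQ Q l" and e: "VQ_vac Q l = \<zero>\<^bsub>VQ Q l\<^esub>"
  have "fa_add (fa_word []) (fa_smult (-1) fa_zero) \<in> NQ Q l"
    using e cls_eqD[of "fa_word []" l fa_zero Q] by (simp add: VQ_vac_def VQ_zero fa_word_FA)
  moreover have "fa_add (fa_word []) (fa_smult (-1) fa_zero) = fa_word []" by (auto simp: fa_defs)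
  ultimately show False using n by simp
qed

theorem proposition3p6:
  fixes Q :: "nat \<Rightarrow> nat \<Rightarrow> complex" and l :: nat
  assumes "\<forall>i\<in>{1..l}. \<forall>j\<in>{1..l}. Q i j * Q j i = 1"
  shows "vacuum_module Q l (VQ Q l) (VQ_X Q l) (VQ_Y Q l) (VQ_vac Q l)
         \<and> AQ_irreducible Q l (VQ Q l) (VQ_X Q l) (VQ_Y Q l)
         \<and> (\<forall>(M :: (complex, 'm) module) X Y w.
              vacuum_module Q l M X Y w \<and> carrier M \<noteq> {\<zero>\<^bsub>M\<^esub>} \<longrightarrow>
                AQ_irreducible Q l M X Y
                \<and> (\<exists>\<phi>. AQ_iso l \<phi> (VQ Q l) (VQ_X Q l) (VQ_Y Q l) M X Y))"
proof -
  have Qinv: "\<And>i j. i \<in> {1..l} \<Longrightarrow> j \<in> {1..l} \<Longrightarrow> Q i j * Q j i = 1" using assms by blast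
  interpret Fk: fock Q l by unfold_locales (rule Qinv)
  have vmV: "vacuum_module Q l (VQ Q l) (VQ_X Q l) (VQ_Y Q l) (VQ_vac Q l)"
    unfolding vacuum_module_def using AQ_module_VQ vacuum_VQ generates_VQ by blast
  interpret V: vqm Q l "VQ Q l" "VQ_X Q l" "VQ_Y Q l" "VQ_vac Q l"
    by unfold_locales (use vmV Qinv in \<open>auto simp: vacuum_module_def\<close>)
  have nzV: "carrier (VQ Q l) \<noteq> {\<zero>\<^bsub>VQ Q l\<^esub>}"
    using VQ_vac_nz[OF Fk.one_notin_NQ] V.wc by blast
  have irrV: "AQ_irreducible Q l (VQ Q l) (VQ_X Q l) (VQ_Y Q l)" by (rule V.irreducible[OF nzV])
  have part3: "AQ_irreducible Q l M X Y \<and> (\<exists>\<phi>. AQ_iso l \<phi> (VQ Q l) (VQ_X Q l) (VQ_Y Q l) M X Y)"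
    if h: "vacuum_module Q l M X Y w" "carrier M \<noteq> {\<zero>\<^bsub>M\<^esub>}" for M :: "(complex, 'm) module" and X Y w
  proof -
    interpret Mi: vqm Q l M X Y w
      by unfold_locales (use h Qinv in \<open>auto simp: vacuum_module_def\<close>)
    show ?thesis using Mi.irreducible[OF h(2)] Mi.iso[OF h(2) irrV] by blast
  qed
  show ?thesis using vmV irrV part3 by blast
qed


end
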